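(* Consider the parametric multistage setting of the context, let $\mu>0$, and assume: (A1) the noises $\mathbf{W}_1,\dots,\mathbf{W}_T$ are independent and each has finite support; (A2) (i) $\Phi(p)<+\infty$ for some $p\in\mathcal{P}_{\mathrm{ad}}$; (ii) each $f_t$ is affine in $(x,u)$; (iii) for all $t$ and all $w\in\mathrm{Supp}(\mathbf{W}_{t+1})$, $L_t(\cdot,\cdot,w,\cdot)\in\Gamma_{\mathcal{K}}[\mathbb{X}\times\mathbb{U},\mathbb{P}]$; (iv) $K\in\Gamma[\mathbb{X},\mathbb{P}]$; (A4) there is a compact $\mathcal{P}\subset\mathbb{P}$ with $\mathrm{dom}\,L_t(x,u,w,\cdot)\subset\mathcal{P}$ for all $(x,u)$, all $t$ and all $w\in\mathrm{Supp}(\mathbf{W}_{t+1})$, and $\mathrm{dom}\,K(x,\cdot)\subset\mathcal{P}$ for all $x$. Then: 1. $\widetilde{V}^\mu_t\le V_t$ for all $t\in\{0,\dots,T\}$; 2. the functions $\widetilde{V}^\mu_0,\dots,\widetilde{V}^\mu_T$ are proper and belong to $\Theta[\mathbb{X},\mathbb{P}]$, and their gradients in $p$ are given by the backward induction $\nabla_p\widetilde{V}^\mu_T(x,p)=\nabla_pK^\mu(x,p)$ and, for $t\in\{0,\dots,T-1\}$, $$\nabla_p\widetilde{V}^\mu_t(x,p)=\mathbb{E}\big[\nabla_pL^\mu_t(x,u^\star,\mathbf{W}_{t+1},p)+\nabla_p\widetilde{V}^\mu_{t+1}\big(f_t(x,u^\star,\mathbf{W}_{t+1}),p\big)\big]$$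 for any $u^\star$ in the nonempty set $\arg\min_{u\in\mathbb{U}}\mathbb{E}\big[L^\mu_t(x,u,\mathbf{W}_{t+1},p)+\widetilde{V}^\mu_{t+1}(f_t(x,u,\mathbf{W}_{t+1}),p)\big]$, where $(x,p)$ ranges over the effective domain of $\widetilde{V}^\mu_t$.
   Context: Setting: $T\ge1$; $\mathbb{X}=\mathbb{R}^{n_x}$, $\mathbb{U}=\mathbb{R}^{n_u}$, $\mathbb{W}=\mathbb{R}^{n_w}$, $\mathbb{P}=\mathbb{R}^{n_p}$; $\mathbf{W}_1,\dots,\mathbf{W}_T$ are $\mathbb{W}$-valued random variables, $\mathrm{Supp}$ = set of values taken with positive probability; dynamics $f_t:\mathbb{X}\times\mathbb{U}\times\mathbb{W}\to\mathbb{X}$, stage costs $L_t:\mathbb{X}\times\mathbb{U}\times\mathbb{W}\times\mathbb{P}\to\,]-\infty,+\infty]$ ($t=0,\dots,T-1$), final cost $K:\mathbb{X}\times\mathbb{P}\to\,]-\infty,+\infty]$, initial state $x_0$, admissible parameter set $\mathcal{P}_{\mathrm{ad}}\subseteq\mathbb{P}$. $\Phi(p)=\inf\mathbb{E}[\sum_{t=0}^{T-1}L_t(\mathbf{X}_t,\mathbf{U}_t,\mathbf{W}_{t+1},p)+K(\mathbf{X}_T,p)]$ over controls $\mathbf{U}_t$ measurable w.r.t. $\sigma(\mathbf{W}_1,\dots,\mathbf{W}_t)$, with $\mathbf{X}_0=x_0$, $\mathbf{X}_{t+1}=f_t(\mathbf{X}_t,\mathbf{U}_t,\mathbf{W}_{t+1})$.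 Value functions: $V_T=K$, $V_t(x,p)=\inf_{u\in\mathbb{U}}\mathbb{E}[L_t(x,u,\mathbf{W}_{t+1},p)+V_{t+1}(f_t(x,u,\mathbf{W}_{t+1}),p)]$. Moreau envelopes: $L^\mu_t(x,u,w,p)=\inf_{p'\in\mathbb{P}}(L_t(x,u,w,p')+\frac{1}{2\mu}\|p-p'\|_2^2)$, $K^\mu(x,p)=\inf_{p'\in\mathbb{P}}(K(x,p')+\frac{1}{2\mu}\|p-p'\|_2^2)$. Lower smooth value functions: $\widetilde{V}^\mu_T=K^\mu$ and $\widetilde{V}^\mu_t(x,p)=\inf_{u\in\mathbb{U}}\mathbb{E}[L^\mu_t(x,u,\mathbf{W}_{t+1},p)+\widetilde{V}^\mu_{t+1}(f_t(x,u,\mathbf{W}_{t+1}),p)]$. Proper: never $-\infty$ and nonempty effective domain $\mathrm{dom}\,g=\{g<+\infty\}$. Function classes: $\Gamma[\mathbb{Y},\mathbb{P}]$ = lsc convex functions $\mathbb{Y}\times\mathbb{P}\to\,]-\infty,+\infty]$; $\Theta[\mathbb{Y},\mathcal{Q}]$ ($\mathcal{Q}\subset\mathbb{P}$) = those $\theta\in\Gamma[\mathbb{Y},\mathbb{P}]$ with $\mathrm{dom}\,\theta=Y_\theta\times\mathcal{Q}$ for some (possibly empty) $Y_\theta$ and $\theta(y,\cdot)$ differentiable on $\mathrm{int}\,\mathcal{Q}$ for $y\in Y_\theta$; $\Gamma_{\mathcal{K}}[\mathbb{X}\times\mathbb{U},\mathbb{P}]$ = those $\gamma\in\Gamma[\mathbb{X}\times\mathbb{U},\mathbb{P}]$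 with $\mathrm{dom}\,\gamma(x,\cdot,p)\subset\mathcal{K}_\gamma$ for all $(x,p)$, for some compact $\mathcal{K}_\gamma\subset\mathbb{U}$. *)

theory Defs
  imports "HOL-Analysis.Analysis" "HOL-Probability.Probability"
begin

definition ereal_lsc :: "('a::topological_space \<Rightarrow> ereal) \<Rightarrow> bool" where
  "ereal_lsc g \<longleftrightarrow> (\<forall>c::real. closed {z. g z \<le> ereal c})"

definition ereal_convex :: "('a::real_vector \<Rightarrow> ereal) \<Rightarrow> bool" where
  "ereal_convex g \<longleftrightarrow> (\<forall>z1 z2. \<forall>t::real. 0 < t \<and> t < 1 \<longrightarrow>
      g ((1 - t) *\<^sub>R z1 + t *\<^sub>R z2) \<le> ereal (1 - t) * g z1 + ereal t * g z2)"

definition edom2 :: "('y \<Rightarrow> 'p \<Rightarrow> ereal) \<Rightarrow> ('y \<times> 'p) set" where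
  "edom2 g = {(y, p). g y p < \<infinity>}"

definition proper2 :: "('y \<Rightarrow> 'p \<Rightarrow> ereal) \<Rightarrow> bool" where
  "proper2 g \<longleftrightarrow> (\<forall>y p. g y p \<noteq> -\<infinity>) \<and> edom2 g \<noteq> {}"

definition Gamma_cl :: "('y::real_normed_vector \<Rightarrow> 'p::real_normed_vector \<Rightarrow> ereal) \<Rightarrow> bool" where
  "Gamma_cl g \<longleftrightarrow> (\<forall>y p. g y p \<noteq> -\<infinity>) \<and>
     ereal_lsc (\<lambda>(y, p). g y p) \<and> ereal_convex (\<lambda>(y, p). g y p)"

definition Theta_cl :: "'p::euclidean_space set \<Rightarrow> ('y::real_normed_vector \<Rightarrow> 'p \<Rightarrow> ereal) \<Rightarrow> bool" where
  "Theta_cl Q g \<longleftrightarrow> Gamma_cl g \<and>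
     (\<exists>Y. edom2 g = Y \<times> Q \<and>
        (\<forall>y\<in>Y. \<forall>p\<in>interior Q. (\<lambda>p'. real_of_ereal (g y p')) differentiable (at p)))"

definition GammaK_cl :: "('x::real_normed_vector \<Rightarrow> 'u::real_normed_vector \<Rightarrow> 'p::real_normed_vector \<Rightarrow> ereal) \<Rightarrow> bool" where
  "GammaK_cl g \<longleftrightarrow> Gamma_cl (\<lambda>(x, u) p. g x u p) \<and>
     (\<exists>KK. compact KK \<and> (\<forall>x p. {u. g x u p < \<infinity>} \<subseteq> KK))"

definition grad :: "('a::real_inner \<Rightarrow> real) \<Rightarrow> 'a \<Rightarrow> 'a" where
  "grad g p = (THE D. GDERIV g p :> D)"

definition moreau :: "real \<Rightarrow> ('p::real_normed_vector \<Rightarrow> ereal) \<Rightarrow> 'p \<Rightarrow> ereal" where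
  "moreau \<mu> g p = (INF p'. g p' + ereal ((norm (p - p'))\<^sup>2 / (2 * \<mu>)))"

definition Lmu :: "real \<Rightarrow> (nat \<Rightarrow> 'x \<Rightarrow> 'u \<Rightarrow> 'w \<Rightarrow> 'p::real_normed_vector \<Rightarrow> ereal)
    \<Rightarrow> nat \<Rightarrow> 'x \<Rightarrow> 'u \<Rightarrow> 'w \<Rightarrow> 'p \<Rightarrow> ereal" where
  "Lmu \<mu> L t x u w = moreau \<mu> (L t x u w)"

definition Kmu :: "real \<Rightarrow> ('x \<Rightarrow> 'p::real_normed_vector \<Rightarrow> ereal) \<Rightarrow> 'x \<Rightarrow> 'p \<Rightarrow> ereal" where
  "Kmu \<mu> K x = moreau \<mu> (K x)"

definition Supp :: "'a measure \<Rightarrow> ('a \<Rightarrow> 'w) \<Rightarrow> 'w set" where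
  "Supp M X = {w. 0 < measure M (X -` {w} \<inter> space M)}"

definition finite_support :: "'a measure \<Rightarrow> ('a \<Rightarrow> 'w) \<Rightarrow> bool" where
  "finite_support M X \<longleftrightarrow> finite (Supp M X) \<and> (AE \<omega> in M. X \<omega> \<in> Supp M X)"

definition Eexp :: "'a measure \<Rightarrow> ('a \<Rightarrow> 'w) \<Rightarrow> ('w \<Rightarrow> ereal) \<Rightarrow> ereal" where
  "Eexp M X g = (\<Sum>w\<in>Supp M X. ereal (measure M (X -` {w} \<inter> space M)) * g w)"

definition Evec :: "'a measure \<Rightarrow> ('a \<Rightarrow> 'w) \<Rightarrow> ('w \<Rightarrow> 'v::real_vector) \<Rightarrow> 'v" where
  "Evec M X g = (\<Sum>w\<in>Supp M X. measure M (X -` {w} \<inter> space M) *\<^sub>R g w)"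

text \<open>Backward recursion, indexed by the number k of remaining stages:
  dp ... T k is the value function at time T - k.\<close>
primrec dp :: "'a measure \<Rightarrow> (nat \<Rightarrow> 'a \<Rightarrow> 'w) \<Rightarrow> (nat \<Rightarrow> 'x \<Rightarrow> 'u \<Rightarrow> 'w \<Rightarrow> 'x)
    \<Rightarrow> (nat \<Rightarrow> 'x \<Rightarrow> 'u \<Rightarrow> 'w \<Rightarrow> 'p \<Rightarrow> ereal) \<Rightarrow> ('x \<Rightarrow> 'p \<Rightarrow> ereal) \<Rightarrow> nat \<Rightarrow> nat
    \<Rightarrow> 'x \<Rightarrow> 'p \<Rightarrow> ereal" where
  "dp M W f L K T 0 = K"
| "dp M W f L K T (Suc k) = (\<lambda>x p. INF u. Eexp M (W (T - Suc k + 1))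
      (\<lambda>w. L (T - Suc k) x u w p + dp M W f L K T k (f (T - Suc k) x u w) p))"

definition Vfun where
  "Vfun M W f L K T t = dp M W f L K T (T - t)"

definition Vmu where
  "Vmu \<mu> M W f L K T t = dp M W f (Lmu \<mu> L) (Kmu \<mu> K) T (T - t)"

text \<open>Policies: by Doob-Dynkin, a control U_t measurable w.r.t. \<sigma>(W_1..W_t) is
  U_t = \<pi>_t(W_1,..,W_t). A policy \<pi> t ws may depend only on ws 1,...,ws t.\<close>
definition nonanticipative :: "nat \<Rightarrow> (nat \<Rightarrow> (nat \<Rightarrow> 'w) \<Rightarrow> 'u) \<Rightarrow> bool" where
  "nonanticipative T \<pi> \<longleftrightarrow> (\<forall>t<T. \<forall>ws ws'. (\<forall>i\<in>{1..t}. ws i = ws' i) \<longrightarrow> \<pi> t ws = \<pi> t ws')"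

primrec traj :: "(nat \<Rightarrow> 'x \<Rightarrow> 'u \<Rightarrow> 'w \<Rightarrow> 'x) \<Rightarrow> 'x \<Rightarrow> (nat \<Rightarrow> (nat \<Rightarrow> 'w) \<Rightarrow> 'u)
    \<Rightarrow> (nat \<Rightarrow> 'w) \<Rightarrow> nat \<Rightarrow> 'x" where
  "traj f x0 \<pi> ws 0 = x0"
| "traj f x0 \<pi> ws (Suc t) = f t (traj f x0 \<pi> ws t) (\<pi> t ws) (ws (Suc t))"

definition path_cost where
  "path_cost f L K T x0 \<pi> ws p =
     (\<Sum>t<T. L t (traj f x0 \<pi> ws t) (\<pi> t ws) (ws (Suc t)) p) + K (traj f x0 \<pi> ws T) p"

text \<open>Expected cost: the joint law of (W_1,...,W_T) is concentrated on the finite set of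
  tuples of support points.\<close>
definition Phi where
  "Phi M W f L K T x0 p = (INF \<pi>\<in>{\<pi>. nonanticipative T \<pi>}.
     \<Sum>ws\<in>(\<Pi>\<^sub>E i\<in>{1..T}. Supp M (W i)).
        ereal (measure M {\<omega>\<in>space M. \<forall>i\<in>{1..T}. W i \<omega> = ws i}) * path_cost f L K T x0 \<pi> ws p)"

end

theory Submission
  imports Defs
begin


lemma grad_unique:
  fixes g :: "'p::euclidean_space \<Rightarrow> real"
  assumes "GDERIV g p :> D" shows "grad g p = D"
proof -
  have "\<And>D'. GDERIV g p :> D' \<Longrightarrow> D' = D"
  proof -
    fix D' assume "GDERIV g p :> D'"
    then have "(\<lambda>h. inner h D') = (\<lambda>h. inner h D)"
      using assms unfolding gderiv_def by (rule has_derivative_unique)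
    then have "inner (D' - D) D' = inner (D' - D) D" by metis
    then have "inner (D' - D) (D' - D) = 0" by (simp add: inner_diff_right)
    then show "D' = D" by simp
  qed
  then show ?thesis unfolding grad_def using assms by (rule the_equality[rotated])
qed

lemma grad_exists:
  fixes g :: "'p::euclidean_space \<Rightarrow> real"
  assumes "g differentiable (at p)" shows "GDERIV g p :> grad g p"
proof -
  obtain f' where d: "(g has_derivative f') (at p)" using assms unfolding differentiable_def by blast
  then have lin: "linear f'" using has_derivative_linear by blast
  define D where "D = (\<Sum>b\<in>Basis. f' b *\<^sub>R b)"
  have "f' h = inner h D" for h
  proof -
    have "f' h = f' (\<Sum>b\<in>Basis. (inner h b) *\<^sub>R b)" by (simp add: euclidean_representation)
    also have "\<dots> = (\<Sum>b\<in>Basis. (inner h b) * f' b)"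
      using lin by (simp add: linear_sum linear_scale)
    also have "\<dots> = inner h D" unfolding D_def by (simp add: inner_sum_right mult.commute)
    finally show ?thesis .
  qed
  then have "f' = (\<lambda>h. inner h D)" by auto
  then have "GDERIV g p :> D" using d unfolding gderiv_def by simp
  then show ?thesis using grad_unique by metis
qed



definition cvxR :: "('a::real_vector \<Rightarrow> ereal) \<Rightarrow> bool" where
  "cvxR g \<longleftrightarrow> (\<forall>z1 z2 t. 0 < t \<and> t < 1 \<and> g z1 < \<infinity> \<and> g z2 < \<infinity> \<longrightarrow>
     g ((1 - t) *\<^sub>R z1 + t *\<^sub>R z2) \<le> ereal ((1 - t) * real_of_ereal (g z1) + t * real_of_ereal (g z2)))"

definition good :: "('a::real_normed_vector \<Rightarrow> ereal) \<Rightarrow> bool" where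
  "good g \<longleftrightarrow> (\<forall>z. g z \<noteq> -\<infinity>) \<and> ereal_lsc g \<and> cvxR g"

lemma fin_real: "(x::ereal) \<noteq> -\<infinity> \<Longrightarrow> x < \<infinity> \<Longrightarrow> x = ereal (real_of_ereal x)"
  by (cases x) auto

lemma inf_comb:
  assumes "0 < t" "t < 1" "x \<noteq> -\<infinity>" "y \<noteq> -\<infinity>" "\<not> (x < \<infinity> \<and> y < \<infinity>)"
  shows "ereal (1 - t) * x + ereal t * y = \<infinity>"
proof -
  have p: "ereal (1 - t) > 0" "ereal t > 0" using assms by auto
  show ?thesis
  proof (cases "x = \<infinity>")
    case True
    then have "ereal (1 - t) * x = \<infinity>" using p by simp
    moreover have "ereal t * y \<noteq> -\<infinity>" using assms(3,4) p by (cases y) auto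
    ultimately show ?thesis by simp
  next
    case False
    then have "y = \<infinity>" using assms(5) by auto
    then have "ereal t * y = \<infinity>" using p by simp
    moreover have "ereal (1 - t) * x \<noteq> -\<infinity>" using assms(3) p by (cases x) auto
    ultimately show ?thesis by simp
  qed
qed

lemma convex_iff_cvxR:
  assumes "\<forall>z. g z \<noteq> -\<infinity>"
  shows "ereal_convex g \<longleftrightarrow> cvxR g"
proof
  assume c: "ereal_convex g"
  show "cvxR g" unfolding cvxR_def
  proof (intro allI impI)
    fix z1 z2 and t :: real assume h: "0 < t \<and> t < 1 \<and> g z1 < \<infinity> \<and> g z2 < \<infinity>"
    have e1: "g z1 = ereal (real_of_ereal (g z1))" using h assms fin_real by blast
    have e2: "g z2 = ereal (real_of_ereal (g z2))" using h assms fin_real by blast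
    have "g ((1 - t) *\<^sub>R z1 + t *\<^sub>R z2) \<le> ereal (1 - t) * g z1 + ereal t * g z2"
      using c h unfolding ereal_convex_def by blast
    also have "\<dots> = ereal ((1 - t) * real_of_ereal (g z1) + t * real_of_ereal (g z2))"
      by (subst e1, subst e2) simp
    finally show "g ((1 - t) *\<^sub>R z1 + t *\<^sub>R z2) \<le> ereal ((1 - t) * real_of_ereal (g z1) + t * real_of_ereal (g z2))" .
  qed
next
  assume c: "cvxR g"
  show "ereal_convex g" unfolding ereal_convex_def
  proof (intro allI impI)
    fix z1 z2 and t :: real assume h: "0 < t \<and> t < 1"
    show "g ((1 - t) *\<^sub>R z1 + t *\<^sub>R z2) \<le> ereal (1 - t) * g z1 + ereal t * g z2"
    proof (cases "g z1 < \<infinity> \<and> g z2 < \<infinity>")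
      case True
      have e1: "g z1 = ereal (real_of_ereal (g z1))" using True assms fin_real by blast
      have e2: "g z2 = ereal (real_of_ereal (g z2))" using True assms fin_real by blast
      have "g ((1 - t) *\<^sub>R z1 + t *\<^sub>R z2) \<le> ereal ((1 - t) * real_of_ereal (g z1) + t * real_of_ereal (g z2))"
        using c h True unfolding cvxR_def by blast
      also have "\<dots> = ereal (1 - t) * g z1 + ereal t * g z2"
        by (subst e1, subst e2) simp
      finally show ?thesis .
    next
      case False
      have a1: "g z1 \<noteq> -\<infinity>" "g z2 \<noteq> -\<infinity>" using assms by auto
      from False have eq: "ereal (1 - t) * g z1 + ereal t * g z2 = \<infinity>"
        using h a1 by (intro inf_comb) auto
      show ?thesis by (simp only: eq ereal_less_eq(1))
    qed
  qed
qed

lemma Gamma_cl_good: "Gamma_cl g \<longleftrightarrow> good (\<lambda>(y, p). g y p)"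
proof -
  have "(\<forall>y p. g y p \<noteq> -\<infinity>) \<longleftrightarrow> (\<forall>z. (\<lambda>(y, p). g y p) z \<noteq> -\<infinity>)" by auto
  then show ?thesis unfolding Gamma_cl_def good_def using convex_iff_cvxR by metis
qed

lemma lsc_iff:
  "ereal_lsc g \<longleftrightarrow> (\<forall>z c. ereal c < g z \<longrightarrow> eventually (\<lambda>z'. ereal c < g z') (nhds z))"
proof -
  have "closed {z. g z \<le> ereal c} \<longleftrightarrow> open {z. ereal c < g z}" for c
  proof -
    have "- {z. g z \<le> ereal c} = {z. ereal c < g z}" by auto
    then show ?thesis unfolding closed_def by simp
  qed
  moreover have "open U \<longleftrightarrow> (\<forall>z\<in>U. eventually (\<lambda>z'. z' \<in> U) (nhds z))" for U :: "'a set"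
    by (metis eventually_nhds open_subopen subsetI eventually_nhds_in_open)
  ultimately show ?thesis unfolding ereal_lsc_def by auto
qed

lemma ereal_add_lt: "ereal c1 < x \<Longrightarrow> ereal c2 < y \<Longrightarrow> ereal (c1 + c2) < x + y"
  by (cases x; cases y) auto

lemma lsc_add:
  assumes "ereal_lsc g1" "ereal_lsc g2" "\<forall>z. g1 z \<noteq> -\<infinity>" "\<forall>z. g2 z \<noteq> -\<infinity>"
  shows "ereal_lsc (\<lambda>z. g1 z + g2 z)"
  unfolding lsc_iff
proof (intro allI impI)
  fix z c assume lt: "ereal c < g1 z + g2 z"
  have "\<exists>c1 c2. c = c1 + c2 \<and> ereal c1 < g1 z \<and> ereal c2 < g2 z"
  proof (cases "g1 z")
    case (real a)
    show ?thesis
    proof (cases "g2 z")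
      case (real b)
      with \<open>g1 z = ereal a\<close> lt have "c < a + b" by simp
      then show ?thesis using \<open>g1 z = ereal a\<close> real
        by (intro exI[of _ "a - (a + b - c) / 2"] exI[of _ "b - (a + b - c) / 2"]) auto
    next
      case PInf
      then show ?thesis using \<open>g1 z = ereal a\<close>
        by (intro exI[of _ "a - 1"] exI[of _ "c - (a - 1)"]) auto
    next
      case MInf then show ?thesis using assms by auto
    qed
  next
    case PInf
    obtain b where b: "ereal b < g2 z"
    proof (cases "g2 z")
      case (real r) then show ?thesis using that[of "r - 1"] by simp
    next
      case PInf then show ?thesis using that[of 0] by simp
    qed (use assms in auto)
    then show ?thesis using PInf by (intro exI[of _ "c - b"] exI[of _ b]) auto
  next
    case MInf then show ?thesis using assms by auto
  qed
  then obtain c1 c2 where c: "c = c1 + c2" "ereal c1 < g1 z" "ereal c2 < g2 z" by blast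
  have "eventually (\<lambda>z'. ereal c1 < g1 z') (nhds z)" "eventually (\<lambda>z'. ereal c2 < g2 z') (nhds z)"
    using assms(1,2) c unfolding lsc_iff by auto
  then show "eventually (\<lambda>z'. ereal c < g1 z' + g2 z') (nhds z)"
    by eventually_elim (use c ereal_add_lt in auto)
qed

lemma lsc_scale:
  assumes "ereal_lsc g" "q > 0"
  shows "ereal_lsc (\<lambda>z. ereal q * g z)"
proof -
  have "{z. ereal q * g z \<le> ereal c} = {z. g z \<le> ereal (c / q)}" for c
  proof -
    have "ereal q * x \<le> ereal c \<longleftrightarrow> x \<le> ereal (c / q)" for x
      using assms(2) by (cases x) (auto simp: field_simps)
    then show ?thesis by auto
  qed
  then show ?thesis using assms(1) unfolding ereal_lsc_def by simp
qed

lemma lsc_const: "ereal_lsc (\<lambda>z. ereal a)"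
  unfolding ereal_lsc_def by (metis (mono_tags) Collect_const closed_UNIV closed_empty)

lemma lsc_comp:
  assumes "ereal_lsc g" "continuous_on UNIV \<phi>"
  shows "ereal_lsc (\<lambda>z. g (\<phi> z))"
proof -
  have "{z. g (\<phi> z) \<le> ereal c} = \<phi> -` {z. g z \<le> ereal c}" for c by auto
  moreover have "closed (\<phi> -` {z. g z \<le> ereal c})" for c
    using assms unfolding ereal_lsc_def by (intro closed_vimage) auto
  ultimately show ?thesis unfolding ereal_lsc_def by simp
qed

lemma lsc_real:
  assumes "continuous_on UNIV r"
  shows "ereal_lsc (\<lambda>z. ereal (r z))"
  unfolding ereal_lsc_def
proof
  fix c
  have "{z. ereal (r z) \<le> ereal c} = {z. r z \<le> c}" by simp
  moreover have "closed {z. r z \<le> c}" using assms by (intro closed_Collect_le) auto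
  ultimately show "closed {z. ereal (r z) \<le> ereal c}" by simp
qed



lemma add_fin: "(x::ereal) \<noteq> -\<infinity> \<Longrightarrow> y \<noteq> -\<infinity> \<Longrightarrow> x + y < \<infinity> \<Longrightarrow> x < \<infinity> \<and> y < \<infinity>"
  by (cases x; cases y) auto

lemma add_real: "(x::ereal) \<noteq> -\<infinity> \<Longrightarrow> y \<noteq> -\<infinity> \<Longrightarrow> x < \<infinity> \<Longrightarrow> y < \<infinity> \<Longrightarrow>
   real_of_ereal (x + y) = real_of_ereal x + real_of_ereal y"
  by (cases x; cases y) auto

lemma add_ninf: "(x::ereal) \<noteq> -\<infinity> \<Longrightarrow> y \<noteq> -\<infinity> \<Longrightarrow> x + y \<noteq> -\<infinity>"
  by (cases x; cases y) auto

lemma scale_ninf: "(x::ereal) \<noteq> -\<infinity> \<Longrightarrow> q > 0 \<Longrightarrow> ereal q * x \<noteq> -\<infinity>"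
  by (cases x) auto

lemma cvxR_add:
  assumes "cvxR g1" "cvxR g2" "\<forall>z. g1 z \<noteq> -\<infinity>" "\<forall>z. g2 z \<noteq> -\<infinity>"
  shows "cvxR (\<lambda>z. g1 z + g2 z)"
  unfolding cvxR_def
proof (intro allI impI)
  fix z1 z2 and t :: real assume h: "0 < t \<and> t < 1 \<and> g1 z1 + g2 z1 < \<infinity> \<and> g1 z2 + g2 z2 < \<infinity>"
  have f1: "g1 z1 < \<infinity>" "g2 z1 < \<infinity>" using add_fin h assms(3,4) by blast+
  have f2: "g1 z2 < \<infinity>" "g2 z2 < \<infinity>" using add_fin h assms(3,4) by blast+
  have "g1 ((1 - t) *\<^sub>R z1 + t *\<^sub>R z2) + g2 ((1 - t) *\<^sub>R z1 + t *\<^sub>R z2)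
     \<le> ereal ((1 - t) * real_of_ereal (g1 z1) + t * real_of_ereal (g1 z2))
       + ereal ((1 - t) * real_of_ereal (g2 z1) + t * real_of_ereal (g2 z2))"
    using assms(1,2) h f1 f2 unfolding cvxR_def by (intro add_mono) auto
  also have "\<dots> = ereal ((1 - t) * real_of_ereal (g1 z1 + g2 z1) + t * real_of_ereal (g1 z2 + g2 z2))"
    using add_real[of "g1 z1" "g2 z1"] add_real[of "g1 z2" "g2 z2"] f1 f2 assms(3,4)
    by (simp add: algebra_simps)
  finally show "g1 ((1 - t) *\<^sub>R z1 + t *\<^sub>R z2) + g2 ((1 - t) *\<^sub>R z1 + t *\<^sub>R z2)
     \<le> ereal ((1 - t) * real_of_ereal (g1 z1 + g2 z1) + t * real_of_ereal (g1 z2 + g2 z2))" .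
qed

lemma cvxR_scale:
  assumes "cvxR g" "\<forall>z. g z \<noteq> -\<infinity>" "q > 0"
  shows "cvxR (\<lambda>z. ereal q * g z)"
  unfolding cvxR_def
proof (intro allI impI)
  fix z1 z2 and t :: real assume h: "0 < t \<and> t < 1 \<and> ereal q * g z1 < \<infinity> \<and> ereal q * g z2 < \<infinity>"
  have f: "g z1 < \<infinity>" "g z2 < \<infinity>" using h assms(3) by (auto simp: ereal_mult_infty) 
  then obtain a b where ab: "g z1 = ereal a" "g z2 = ereal b" using assms(2) by (metis fin_real)
  have "g ((1 - t) *\<^sub>R z1 + t *\<^sub>R z2) \<le> ereal ((1 - t) * a + t * b)"
  proof -
    have "g ((1 - t) *\<^sub>R z1 + t *\<^sub>R z2) \<le> ereal ((1 - t) * real_of_ereal (g z1) + t * real_of_ereal (g z2))"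
      using assms(1) h f unfolding cvxR_def by blast
    then show ?thesis using ab by simp
  qed
  then have "ereal q * g ((1 - t) *\<^sub>R z1 + t *\<^sub>R z2) \<le> ereal q * ereal ((1 - t) * a + t * b)"
    using assms(3) by (intro ereal_mult_left_mono) auto
  then show "ereal q * g ((1 - t) *\<^sub>R z1 + t *\<^sub>R z2)
        \<le> ereal ((1 - t) * real_of_ereal (ereal q * g z1) + t * real_of_ereal (ereal q * g z2))"
    using ab by (simp add: algebra_simps)
qed

lemma cvxR_const: "cvxR (\<lambda>z. ereal a)"
  unfolding cvxR_def by (auto simp: algebra_simps)

lemma cvxR_comp:
  assumes "cvxR g" "\<And>a b t. \<phi> ((1 - t) *\<^sub>R a + t *\<^sub>R b) = (1 - t) *\<^sub>R \<phi> a + t *\<^sub>R \<phi> b"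
  shows "cvxR (\<lambda>z. g (\<phi> z))"
  using assms unfolding cvxR_def by simp

lemma cvxR_real:
  assumes "\<And>z1 z2 t. 0 < t \<Longrightarrow> t < 1 \<Longrightarrow> r ((1 - t) *\<^sub>R z1 + t *\<^sub>R z2) \<le> (1 - t) * r z1 + t * r z2"
  shows "cvxR (\<lambda>z. ereal (r z))"
  using assms unfolding cvxR_def by simp

lemma good_add:
  assumes "good g1" "good g2" shows "good (\<lambda>z. g1 z + g2 z)"
  using assms unfolding good_def by (auto intro: lsc_add cvxR_add add_ninf)

lemma good_scale:
  assumes "good g" "q > 0" shows "good (\<lambda>z. ereal q * g z)"
  using assms unfolding good_def by (auto intro: lsc_scale cvxR_scale scale_ninf)

lemma good_const: "good (\<lambda>z. ereal a)"
  unfolding good_def using lsc_const cvxR_const by auto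

lemma good_comp:
  assumes "good g" "continuous_on UNIV \<phi>"
    "\<And>a b t. \<phi> ((1 - t) *\<^sub>R a + t *\<^sub>R b) = (1 - t) *\<^sub>R \<phi> a + t *\<^sub>R \<phi> b"
  shows "good (\<lambda>z. g (\<phi> z))"
  using assms unfolding good_def by (auto intro: lsc_comp cvxR_comp)

lemma good_real:
  assumes "continuous_on UNIV r"
    "\<And>z1 z2 t. 0 < t \<Longrightarrow> t < 1 \<Longrightarrow> r ((1 - t) *\<^sub>R z1 + t *\<^sub>R z2) \<le> (1 - t) * r z1 + t * r z2"
  shows "good (\<lambda>z. ereal (r z))"
  using assms unfolding good_def by (auto intro: lsc_real cvxR_real)

lemma good_sum:
  assumes "finite S" "\<forall>w\<in>S. q w > 0 \<and> good (G w)"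
  shows "good (\<lambda>z. \<Sum>w\<in>S. ereal (q w) * G w z)"
  using assms
proof (induction S rule: finite_induct)
  case empty
  then show ?case using good_const[of 0] by (simp add: zero_ereal_def)
next
  case (insert x F)
  then have "good (\<lambda>z. ereal (q x) * G x z + (\<Sum>w\<in>F. ereal (q w) * G w z))"
    by (intro good_add good_scale) auto
  then show ?case using insert by simp
qed



lemma touch:
  fixes \<phi> \<psi> :: "'p::euclidean_space \<Rightarrow> real"
  assumes le: "\<And>q. \<phi> q \<le> \<psi> q" and eq: "\<phi> p = \<psi> p"
    and mid: "\<And>v. 2 * \<phi> p \<le> \<phi> (p + v) + \<phi> (p - v)"
    and d: "GDERIV \<psi> p :> D"
  shows "GDERIV \<phi> p :> D"
proof -
  define R where "R h = norm (\<psi> (p + h) - \<psi> p - inner h D) / norm h" for h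
  have R0: "(R \<longlongrightarrow> 0) (at 0)" using d unfolding gderiv_def has_derivative_at R_def by blast
  have "(R \<longlongrightarrow> 0) (filtermap uminus (at 0))" using R0 by (simp add: filtermap_at_minus)
  then have R1: "((\<lambda>h. R (- h)) \<longlongrightarrow> 0) (at 0)" by (simp add: filterlim_filtermap)
  have bnd: "norm (norm (\<phi> (p + h) - \<phi> p - inner h D) / norm h) \<le> R h + R (- h)" for h
  proof -
    have up: "\<phi> (p + h) - \<phi> p - inner h D \<le> \<psi> (p + h) - \<psi> p - inner h D"
      using le[of "p + h"] eq by simp
    have "\<phi> (p + h) - \<phi> p - inner h D \<ge> \<phi> p - \<phi> (p - h) - inner h D" using mid[of h] by simp
    moreover have "\<phi> p - \<phi> (p - h) - inner h D \<ge> - (\<psi> (p + - h) - \<psi> p - inner (- h) D)"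
      using le[of "p - h"] eq by simp
    ultimately have lo: "\<phi> (p + h) - \<phi> p - inner h D \<ge> - (\<psi> (p + - h) - \<psi> p - inner (- h) D)" by linarith
    have "norm (\<phi> (p + h) - \<phi> p - inner h D) \<le> norm (\<psi> (p + h) - \<psi> p - inner h D) + norm (\<psi> (p + - h) - \<psi> p - inner (- h) D)"
      using up lo by (simp add: abs_le_iff) linarith
    then have "norm (\<phi> (p + h) - \<phi> p - inner h D) / norm h \<le> R h + R (- h)"
      unfolding R_def by (simp add: add_divide_distrib[symmetric] divide_right_mono)
    then show ?thesis by simp
  qed
  have "((\<lambda>h. norm (\<phi> (p + h) - \<phi> p - inner h D) / norm h) \<longlongrightarrow> 0) (at 0)"
    using R0 R1 by (intro Lim_null_comparison[OF always_eventually[OF allI[OF bnd]]]) (simp add: tendsto_add_zero)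
  then show ?thesis unfolding gderiv_def has_derivative_at by (simp add: bounded_linear_inner_left)
qed

lemma attain:
  fixes g :: "'u::topological_space \<Rightarrow> ereal"
  assumes lsc: "ereal_lsc g" and KK: "compact KK" "\<And>u. g u < \<infinity> \<Longrightarrow> u \<in> KK"
    and fin: "(INF u. g u) < \<infinity>"
  shows "\<exists>u. \<forall>v. g u \<le> g v"
proof -
  let ?m = "INF u. g u"
  let ?I = "{c. ?m < ereal c}"
  have "KK \<inter> (\<Inter>c\<in>?I. {u. g u \<le> ereal c}) \<noteq> {}"
  proof (rule compact_imp_fip_image[OF KK(1)])
    show "closed {u. g u \<le> ereal c}" for c using lsc unfolding ereal_lsc_def by blast
  next
    fix I' assume I': "finite I'" "I' \<subseteq> ?I"
    show "KK \<inter> (\<Inter>c\<in>I'. {u. g u \<le> ereal c}) \<noteq> {}"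
    proof (cases "I' = {}")
      case True
      obtain u where "g u < \<infinity>" using fin by (metis INF_less_iff)
      then show ?thesis using True KK(2) by auto
    next
      case False
      let ?c = "Min I'"
      have "?c \<in> I'" using I' False by simp
      then have "?m < ereal ?c" using I' by auto
      then obtain u where u: "g u < ereal ?c" by (auto simp: INF_less_iff)
      then have "u \<in> KK" using KK(2) by force
      moreover have "g u \<le> ereal c" if "c \<in> I'" for c
        using u Min_le[OF I'(1) that] by (meson le_less less_le_trans ereal_less_eq(3))
      ultimately show ?thesis by blast
    qed
  qed
  then obtain u where u: "\<And>c. ?m < ereal c \<Longrightarrow> g u \<le> ereal c" by blast
  have "g u \<le> ?m"
  proof (rule ccontr)
    assume "\<not> g u \<le> ?m"
    then have "?m < g u" by simp
    then obtain z where "?m < ereal z" "ereal z < g u" using ereal_dense2 by blast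
    then show False using u by fastforce
  qed
  then show ?thesis by (meson INF_lower UNIV_I order_trans)
qed



definition ThetaU :: "('y::real_normed_vector \<Rightarrow> 'p::euclidean_space \<Rightarrow> ereal) \<Rightarrow> bool" where
  "ThetaU g \<longleftrightarrow> good (\<lambda>(y, p). g y p) \<and> (\<forall>y p p'. g y p < \<infinity> \<longrightarrow> g y p' < \<infinity>)
     \<and> (\<forall>y p. g y p < \<infinity> \<longrightarrow> (\<lambda>p'. real_of_ereal (g y p')) differentiable (at p))"

lemma ThetaU_Theta: "ThetaU g \<Longrightarrow> Theta_cl UNIV g"
proof -
  assume th: "ThetaU g"
  let ?Y = "{y. g y 0 < \<infinity>}"
  have "edom2 g = ?Y \<times> UNIV" using th unfolding ThetaU_def edom2_def by blast
  moreover have "\<forall>y\<in>?Y. \<forall>p\<in>interior UNIV. (\<lambda>p'. real_of_ereal (g y p')) differentiable (at p)"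
    using th unfolding ThetaU_def by auto
  moreover have "Gamma_cl g" using th Gamma_cl_good unfolding ThetaU_def by blast
  ultimately show ?thesis unfolding Theta_cl_def by blast
qed

lemma Theta_ThetaU: "Theta_cl UNIV g \<Longrightarrow> ThetaU g"
proof -
  assume th: "Theta_cl UNIV g"
  then obtain Y where Y: "edom2 g = Y \<times> UNIV"
    "\<forall>y\<in>Y. \<forall>p\<in>interior UNIV. (\<lambda>p'. real_of_ereal (g y p')) differentiable (at p)"
    unfolding Theta_cl_def by blast
  have "g y p < \<infinity> \<longleftrightarrow> y \<in> Y" for y p using Y(1) unfolding edom2_def by blast
  moreover have "good (\<lambda>(y, p). g y p)" using th Gamma_cl_good unfolding Theta_cl_def by blast
  ultimately show ?thesis using Y(2) unfolding ThetaU_def by auto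
qed

lemma le_real_lt: "(x::ereal) \<le> ereal c \<Longrightarrow> x < \<infinity>"
  by (cases x) auto

lemma pmin:
  fixes F :: "'y::euclidean_space \<Rightarrow> 'u::euclidean_space \<Rightarrow> 'p::euclidean_space \<Rightarrow> ereal"
  assumes gF: "good (\<lambda>((y, u), p). F y u p)"
    and domF: "\<And>y u p p'. F y u p < \<infinity> \<Longrightarrow> F y u p' < \<infinity>"
    and diffF: "\<And>y u p. F y u p < \<infinity> \<Longrightarrow> (\<lambda>p'. real_of_ereal (F y u p')) differentiable (at p)"
    and KK: "compact KK" "\<And>y u p. F y u p < \<infinity> \<Longrightarrow> u \<in> KK"
  shows "ThetaU (\<lambda>y p. INF u. F y u p)"
    and "\<And>y p. (INF u. F y u p) < \<infinity> \<Longrightarrow> \<exists>u. \<forall>v. F y u p \<le> F y v p"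
    and "\<And>y p u D. (INF u. F y u p) < \<infinity> \<Longrightarrow> (\<forall>v. F y u p \<le> F y v p) \<Longrightarrow>
           GDERIV (\<lambda>p'. real_of_ereal (F y u p')) p :> D \<Longrightarrow>
           GDERIV (\<lambda>p'. real_of_ereal (INF u. F y u p')) p :> D"
proof -
  let ?G = "\<lambda>((y, u), p). F y u p"
  let ?h = "\<lambda>y p. INF u. F y u p"
  have ninf: "F y u p \<noteq> -\<infinity>" for y u p using gF unfolding good_def by (metis case_prod_conv)
  have lscG: "ereal_lsc ?G" using gF unfolding good_def by blast
  have cvG: "cvxR ?G" using gF unfolding good_def by blast
  have lscu: "ereal_lsc (\<lambda>u. F y u p)" for y p
  proof -
    have "ereal_lsc (\<lambda>u. ?G ((y, u), p))"
      by (rule lsc_comp[OF lscG]) (intro continuous_intros)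
    then show ?thesis by simp
  qed
  show att: "\<exists>u. \<forall>v. F y u p \<le> F y v p" if "?h y p < \<infinity>" for y p
    using attain[OF lscu KK(1)] KK(2) that by blast
  have hmin: "?h y p = F y u p" if "\<forall>v. F y u p \<le> F y v p" for y p u
    using that by (metis (no_types, lifting) INF_lower UNIV_I antisym le_INF_iff)
  have hle: "?h y p \<le> F y u p" for y p u by (metis INF_lower UNIV_I)
  have hninf: "?h y p \<noteq> -\<infinity>" for y p
  proof (cases "?h y p < \<infinity>")
    case True
    obtain u where "\<forall>v. F y u p \<le> F y v p" using att[OF True] by blast
    then show ?thesis using hmin ninf by metis
  next
    case False then show ?thesis by auto
  qed
  have hdom: "?h y p' < \<infinity>" if hf: "?h y p < \<infinity>" for y p p'
  proof -
    obtain u where "\<forall>v. F y u p \<le> F y v p" using att hf by blast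
    then have "F y u p < \<infinity>" using hmin hf by metis
    then have "F y u p' < \<infinity>" using domF by blast
    then show ?thesis using hle le_less_trans by blast
  qed
  have hcvx: "cvxR (\<lambda>(y, p). ?h y p)"
    unfolding cvxR_def
  proof (intro allI impI)
    fix z1 z2 :: "'y \<times> 'p" and t :: real
    obtain y1 p1 y2 p2 where z: "z1 = (y1, p1)" "z2 = (y2, p2)" by fastforce
    assume a: "0 < t \<and> t < 1 \<and> (\<lambda>(y, p). ?h y p) z1 < \<infinity> \<and> (\<lambda>(y, p). ?h y p) z2 < \<infinity>"
    then have f1: "?h y1 p1 < \<infinity>" and f2: "?h y2 p2 < \<infinity>" using z by auto
    obtain u1 where u1: "\<forall>v. F y1 u1 p1 \<le> F y1 v p1" using att f1 by blast
    obtain u2 where u2: "\<forall>v. F y2 u2 p2 \<le> F y2 v p2" using att f2 by blast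
    have e1: "?h y1 p1 = F y1 u1 p1" using hmin u1 by blast
    have e2: "?h y2 p2 = F y2 u2 p2" using hmin u2 by blast
    have g1: "?G ((y1, u1), p1) < \<infinity>" using f1 e1 by simp
    have g2: "?G ((y2, u2), p2) < \<infinity>" using f2 e2 by simp
    have "?G ((1 - t) *\<^sub>R ((y1, u1), p1) + t *\<^sub>R ((y2, u2), p2))
       \<le> ereal ((1 - t) * real_of_ereal (?G ((y1, u1), p1)) + t * real_of_ereal (?G ((y2, u2), p2)))"
      using cvG[unfolded cvxR_def, rule_format, of t "((y1, u1), p1)" "((y2, u2), p2)"] a g1 g2 by blast
    then have "F ((1 - t) *\<^sub>R y1 + t *\<^sub>R y2) ((1 - t) *\<^sub>R u1 + t *\<^sub>R u2) ((1 - t) *\<^sub>R p1 + t *\<^sub>R p2)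
       \<le> ereal ((1 - t) * real_of_ereal (?h y1 p1) + t * real_of_ereal (?h y2 p2))"
      by (simp only: e1 e2) simp
    then have "?h ((1 - t) *\<^sub>R y1 + t *\<^sub>R y2) ((1 - t) *\<^sub>R p1 + t *\<^sub>R p2)
       \<le> ereal ((1 - t) * real_of_ereal (?h y1 p1) + t * real_of_ereal (?h y2 p2))"
      by (rule order_trans[OF hle])
    then show "(\<lambda>(y, p). ?h y p) ((1 - t) *\<^sub>R z1 + t *\<^sub>R z2)
       \<le> ereal ((1 - t) * real_of_ereal ((\<lambda>(y, p). ?h y p) z1) + t * real_of_ereal ((\<lambda>(y, p). ?h y p) z2))"
      unfolding z by simp
  qed
  have hlsc: "ereal_lsc (\<lambda>(y, p). ?h y p)"
    unfolding ereal_lsc_def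
  proof
    fix c :: real
    let ?T = "{(u, (y, p)). F y u p \<le> ereal c}"
    have "?T = (\<lambda>(u, (y, p)). ((y, u), p)) -` {z. ?G z \<le> ereal c}" by auto
    moreover have "closed ((\<lambda>(u, (y, p)). ((y, u), p)) -` {z. ?G z \<le> ereal c})"
    proof (rule closed_vimage)
      show "closed {z. ?G z \<le> ereal c}" using lscG unfolding ereal_lsc_def by blast
      show "continuous_on UNIV (\<lambda>(u, (y, p)). ((y, u), p))"
        unfolding case_prod_beta by (intro continuous_intros)
    qed
    ultimately have cT: "closed ?T" by simp
    have A: "\<exists>u. u \<in> KK \<and> (u, y, p) \<in> ?T" if hc: "?h y p \<le> ereal c" for y p
    proof -
      have "?h y p < \<infinity>" using hc le_real_lt by blast
      then obtain u where u: "\<forall>v. F y u p \<le> F y v p" using att by blast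
      then have "F y u p \<le> ereal c" using hmin hc by metis
      moreover have "F y u p < \<infinity>" using calculation le_real_lt by blast
      ultimately show "\<exists>u. u \<in> KK \<and> (u, y, p) \<in> ?T" using KK(2) by blast
    qed
    have B: "?h y p \<le> ereal c" if "(u, y, p) \<in> ?T" for u y p
    proof -
      have "F y u p \<le> ereal c" using that by simp
      then show ?thesis using hle[of y p u] by simp
    qed
    have "{z. (\<lambda>(y, p). ?h y p) z \<le> ereal c} = {yp. \<exists>u. u \<in> KK \<and> (u, yp) \<in> ?T}"
    proof (rule set_eqI)
      fix z :: "'y \<times> 'p"
      obtain y p where z: "z = (y, p)" by fastforce
      show "z \<in> {z. (\<lambda>(y, p). ?h y p) z \<le> ereal c} \<longleftrightarrow> z \<in> {yp. \<exists>u. u \<in> KK \<and> (u, yp) \<in> ?T}"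
        unfolding z mem_Collect_eq case_prod_conv using A B by blast
    qed
    then show "closed {z. (\<lambda>(y, p). ?h y p) z \<le> ereal c}"
      using closed_compact_projection[OF KK(1) cT] by simp
  qed
  have hgrad: "GDERIV (\<lambda>p'. real_of_ereal (?h y p')) p :> D"
    if f: "?h y p < \<infinity>" and u: "\<forall>v. F y u p \<le> F y v p"
      and d: "GDERIV (\<lambda>p'. real_of_ereal (F y u p')) p :> D" for y p u D
  proof (rule touch[OF _ _ _ d])
    have Fu: "F y u p < \<infinity>" using f u hmin by metis
    have hf: "?h y q = ereal (real_of_ereal (?h y q))" for q using hdom[OF f] hninf fin_real by blast
    have Ff: "F y u q = ereal (real_of_ereal (F y u q))" for q using domF[OF Fu] ninf fin_real by blast
    show "real_of_ereal (?h y q) \<le> real_of_ereal (F y u q)" for q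
      using hle[of y q u] hf[of q] Ff[of q] by (metis ereal_less_eq(3))
    show "real_of_ereal (?h y p) = real_of_ereal (F y u p)" using hmin u by metis
    show "2 * real_of_ereal (?h y p) \<le> real_of_ereal (?h y (p + v)) + real_of_ereal (?h y (p - v))" for v
    proof -
      have c1: "(\<lambda>(y, p). ?h y p) (y, p + v) < \<infinity>" "(\<lambda>(y, p). ?h y p) (y, p - v) < \<infinity>"
        using hdom[OF f] by auto
      have "(\<lambda>(y, p). ?h y p) ((1 - 1/2) *\<^sub>R (y, p + v) + (1/2) *\<^sub>R (y, p - v))
         \<le> ereal ((1 - 1/2) * real_of_ereal ((\<lambda>(y, p). ?h y p) (y, p + v)) + (1/2) * real_of_ereal ((\<lambda>(y, p). ?h y p) (y, p - v)))"
        using hcvx[unfolded cvxR_def, rule_format, of "1/2" "(y, p + v)" "(y, p - v)"] c1 by simp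
      moreover have "(1 - 1/2) *\<^sub>R (y, p + v) + (1/2::real) *\<^sub>R (y, p - v) = (y, p)"
      proof -
        have "(1/2::real) *\<^sub>R y + (1/2) *\<^sub>R y = y" by (simp add: scaleR_add_left[symmetric])
        moreover have "(1/2::real) *\<^sub>R (p + v) + (1/2) *\<^sub>R (p - v) = p"
          by (simp add: algebra_simps scaleR_add_left[symmetric])
        ultimately show ?thesis by simp
      qed
      ultimately have "?h y p \<le> ereal ((1/2) * real_of_ereal (?h y (p + v)) + (1/2) * real_of_ereal (?h y (p - v)))"
        by simp
      then have "real_of_ereal (?h y p) \<le> (1/2) * real_of_ereal (?h y (p + v)) + (1/2) * real_of_ereal (?h y (p - v))"
        using hf[of p] by (metis ereal_less_eq(3))
      then show ?thesis by simp 
    qed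
  qed
  show "GDERIV (\<lambda>p'. real_of_ereal (?h y p')) p :> D"
    if "?h y p < \<infinity>" "\<forall>v. F y u p \<le> F y v p" "GDERIV (\<lambda>p'. real_of_ereal (F y u p')) p :> D" for y p u D
    using hgrad that by blast
  show "ThetaU ?h"
    unfolding ThetaU_def good_def
  proof (intro conjI allI impI)
    show "(\<lambda>(y, p). ?h y p) z \<noteq> -\<infinity>" for z using hninf by (cases z) auto
    show "ereal_lsc (\<lambda>(y, p). ?h y p)" by (rule hlsc)
    show "cvxR (\<lambda>(y, p). ?h y p)" by (rule hcvx)
    show "?h y p' < \<infinity>" if "?h y p < \<infinity>" for y p p' using hdom that by blast
    show "(\<lambda>p'. real_of_ereal (?h y p')) differentiable (at p)" if hf: "?h y p < \<infinity>" for y p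
    proof -
      obtain u where u: "\<forall>v. F y u p \<le> F y v p" using att hf by blast
      then have "F y u p < \<infinity>" using hmin hf by metis
      then have "GDERIV (\<lambda>p'. real_of_ereal (F y u p')) p :> grad (\<lambda>p'. real_of_ereal (F y u p')) p"
        using diffF grad_exists by blast
      then have "GDERIV (\<lambda>p'. real_of_ereal (?h y p')) p :> grad (\<lambda>p'. real_of_ereal (F y u p')) p"
        using hgrad hf u by blast
      then show ?thesis unfolding gderiv_def differentiable_def by blast
    qed
  qed
qed



lemma normsq_convex:
  fixes a b :: "'a::real_inner"
  assumes "0 \<le> t" "t \<le> 1"
  shows "(norm ((1 - t) *\<^sub>R a + t *\<^sub>R b))\<^sup>2 \<le> (1 - t) * (norm a)\<^sup>2 + t * (norm b)\<^sup>2"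
proof -
  have "(1 - t) * (norm a)\<^sup>2 + t * (norm b)\<^sup>2 - (norm ((1 - t) *\<^sub>R a + t *\<^sub>R b))\<^sup>2 = t * (1 - t) * (norm (a - b))\<^sup>2"
    unfolding power2_norm_eq_inner
    by (simp add: inner_add_left inner_add_right inner_diff_left inner_diff_right
        inner_commute algebra_simps)
  moreover have "t * (1 - t) * (norm (a - b))\<^sup>2 \<ge> 0" using assms by simp
  ultimately show ?thesis by linarith
qed

lemma div_aux:
  fixes X a b t \<mu> :: real
  assumes "X \<le> (1 - t) * a + t * b" "\<mu> > 0"
  shows "X / (2 * \<mu>) \<le> (1 - t) * (a / (2 * \<mu>)) + t * (b / (2 * \<mu>))"
proof -
  have "X / (2 * \<mu>) \<le> ((1 - t) * a + t * b) / (2 * \<mu>)" using assms by (intro divide_right_mono) auto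
  also have "\<dots> = (1 - t) * (a / (2 * \<mu>)) + t * (b / (2 * \<mu>))" by (simp add: add_divide_distrib)
  finally show ?thesis .
qed

lemma moreau_ThetaU:
  fixes G :: "'y::euclidean_space \<Rightarrow> 'p::euclidean_space \<Rightarrow> ereal"
  assumes gG: "Gamma_cl G" and PP: "compact PP" "\<And>y p. G y p < \<infinity> \<Longrightarrow> p \<in> PP" and mu: "\<mu> > 0"
  shows "ThetaU (\<lambda>y p. moreau \<mu> (G y) p)"
proof -
  define F where "F y u p = G y u + ereal ((norm (p - u))\<^sup>2 / (2 * \<mu>))" for y u p
  have ninf: "G y u \<noteq> -\<infinity>" for y u using gG unfolding Gamma_cl_def by blast
  have g0: "good (\<lambda>(y, p). G y p)" using gG Gamma_cl_good by blast
  define r where "r z = (norm (snd z - snd (fst z)))\<^sup>2 / (2 * \<mu>)" for z :: "('y \<times> 'p) \<times> 'p"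
  have g1: "good (\<lambda>z. (\<lambda>(y, p). G y p) (fst z))"
    by (rule good_comp[OF g0]) (auto intro: continuous_intros)
  have g2: "good (\<lambda>z. ereal (r z))"
  proof (rule good_real)
    show "continuous_on UNIV r" unfolding r_def using mu by (intro continuous_intros) auto
    fix z1 z2 :: "('y \<times> 'p) \<times> 'p" and t :: real assume t: "0 < t" "t < 1"
    have "snd ((1 - t) *\<^sub>R z1 + t *\<^sub>R z2) - snd (fst ((1 - t) *\<^sub>R z1 + t *\<^sub>R z2))
        = (1 - t) *\<^sub>R (snd z1 - snd (fst z1)) + t *\<^sub>R (snd z2 - snd (fst z2))"
      by (simp add: algebra_simps)
    then have "(norm (snd ((1 - t) *\<^sub>R z1 + t *\<^sub>R z2) - snd (fst ((1 - t) *\<^sub>R z1 + t *\<^sub>R z2))))\<^sup>2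
       \<le> (1 - t) * (norm (snd z1 - snd (fst z1)))\<^sup>2 + t * (norm (snd z2 - snd (fst z2)))\<^sup>2"
      using normsq_convex[of t] t by simp
    then show "r ((1 - t) *\<^sub>R z1 + t *\<^sub>R z2) \<le> (1 - t) * r z1 + t * r z2"
      unfolding r_def using mu div_aux by simp
  qed
  have gF: "good (\<lambda>((y, u), p). F y u p)"
  proof -
    have "(\<lambda>((y, u), p). F y u p) = (\<lambda>z. (\<lambda>(y, p). G y p) (fst z) + ereal (r z))"
      by (auto simp: F_def r_def fun_eq_iff)
    then show ?thesis using good_add[OF g1 g2] by simp
  qed
  have Ffin: "G y u < \<infinity>" if "F y u p < \<infinity>" for y u p
    using that ninf unfolding F_def by auto
  have "ThetaU (\<lambda>y p. INF u. F y u p)"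
  proof (rule pmin(1)[of F PP])
    show "good (\<lambda>((y, u), p). F y u p)" by (rule gF)
    show "F y u p' < \<infinity>" if "F y u p < \<infinity>" for y u p p'
      using Ffin[OF that] unfolding F_def by auto
    show "compact PP" by (rule PP(1))
    show "u \<in> PP" if "F y u p < \<infinity>" for y u p using Ffin[OF that] PP(2) by blast
    show "(\<lambda>p'. real_of_ereal (F y u p')) differentiable (at p)" if hF: "F y u p < \<infinity>" for y u p
    proof -
      obtain c where c: "G y u = ereal c" using Ffin[OF hF] ninf by (cases "G y u") auto
      have "(\<lambda>p'. real_of_ereal (F y u p')) = (\<lambda>p'. c + inner (p' - u) (p' - u) / (2 * \<mu>))"
        by (simp add: F_def c fun_eq_iff power2_norm_eq_inner)
      moreover have "(\<lambda>p'. c + inner (p' - u) (p' - u) / (2 * \<mu>)) differentiable (at p)"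
        using mu by (intro derivative_intros differentiable_inner) auto
      ultimately show ?thesis by simp
    qed
  qed
  then show ?thesis by (simp add: moreau_def F_def)
qed



lemma ThetaU_D:
  assumes "ThetaU g"
  shows "good (\<lambda>(y, p). g y p)"
    and "g y p < \<infinity> \<Longrightarrow> g y p' < \<infinity>"
    and "g y p < \<infinity> \<Longrightarrow> (\<lambda>p'. real_of_ereal (g y p')) differentiable (at p)"
    and "g y p \<noteq> -\<infinity>"
proof -
  have ABC: "good (\<lambda>(y, p). g y p) \<and> (\<forall>y p p'. g y p < \<infinity> \<longrightarrow> g y p' < \<infinity>)
    \<and> (\<forall>y p. g y p < \<infinity> \<longrightarrow> (\<lambda>p'. real_of_ereal (g y p')) differentiable (at p))"
    using assms unfolding ThetaU_def .
  note A = ABC[THEN conjunct1] and B = ABC[THEN conjunct2, THEN conjunct1]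
    and C = ABC[THEN conjunct2, THEN conjunct2]
  show "good (\<lambda>(y, p). g y p)" by (rule A)
  show "g y p < \<infinity> \<Longrightarrow> g y p' < \<infinity>" using B by blast
  show "g y p < \<infinity> \<Longrightarrow> (\<lambda>p'. real_of_ereal (g y p')) differentiable (at p)" using C by blast
  have "\<forall>z. (\<lambda>(y, p). g y p) z \<noteq> -\<infinity>" using A unfolding good_def by (elim conjE)
  then have "(\<lambda>(y, p). g y p) (y, p) \<noteq> -\<infinity>" by (rule spec)
  then show "g y p \<noteq> -\<infinity>" by simp
qed

lemma add_lt_inf_iff: "(x::ereal) \<noteq> -\<infinity> \<Longrightarrow> y \<noteq> -\<infinity> \<Longrightarrow> (x + y < \<infinity> \<longleftrightarrow> x < \<infinity> \<and> y < \<infinity>)"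
  by (cases x; cases y) auto

lemma gderiv_sum:
  fixes h :: "'w \<Rightarrow> 'p::euclidean_space \<Rightarrow> real"
  assumes "finite S" "\<And>w. w \<in> S \<Longrightarrow> GDERIV (h w) p :> D w"
  shows "GDERIV (\<lambda>p'. \<Sum>w\<in>S. q w * h w p') p :> (\<Sum>w\<in>S. q w *\<^sub>R D w)"
proof -
  have "((\<lambda>p'. \<Sum>w\<in>S. q w * h w p') has_derivative (\<lambda>x. \<Sum>w\<in>S. q w * inner x (D w))) (at p)"
    using assms(2) unfolding gderiv_def by (intro has_derivative_sum has_derivative_mult_right) auto
  moreover have "(\<lambda>x. \<Sum>w\<in>S. q w * inner x (D w)) = (\<lambda>x. inner x (\<Sum>w\<in>S. q w *\<^sub>R D w))"
    by (simp add: inner_sum_right)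
  ultimately show ?thesis unfolding gderiv_def by simp
qed

lemma sum_ninf:
  assumes "\<forall>w\<in>S. q w > 0 \<and> X w \<noteq> -\<infinity>"
  shows "(\<Sum>w\<in>S. ereal (q w) * X w) \<noteq> -\<infinity>"
  using assms
proof (induction S rule: infinite_finite_induct)
  case (insert x F)
  then show ?case using add_ninf scale_ninf by simp
qed auto

lemma sum_lt_inf:
  assumes "finite S" "\<forall>w\<in>S. q w > 0 \<and> X w \<noteq> -\<infinity>"
  shows "(\<Sum>w\<in>S. ereal (q w) * X w) < \<infinity> \<longleftrightarrow> (\<forall>w\<in>S. X w < \<infinity>)"
proof -
  have "ereal (q w) * X w = \<infinity> \<longleftrightarrow> X w = \<infinity>" if "w \<in> S" for w
    using assms(2) that by (cases "X w") auto
  then show ?thesis using sum_Pinfty[of "\<lambda>w. ereal (q w) * X w" S] assms(1) by auto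
qed

lemma sum_real_eq:
  assumes "\<forall>w\<in>S. X w \<noteq> -\<infinity> \<and> X w < \<infinity>"
  shows "real_of_ereal (\<Sum>w\<in>S. ereal (q w) * X w) = (\<Sum>w\<in>S. q w * real_of_ereal (X w))"
proof -
  have "(\<Sum>w\<in>S. ereal (q w) * X w) = (\<Sum>w\<in>S. ereal (q w * real_of_ereal (X w)))"
  proof (rule sum.cong)
    fix w assume "w \<in> S"
    then have "X w = ereal (real_of_ereal (X w))" using assms fin_real by blast
    then show "ereal (q w) * X w = ereal (q w * real_of_ereal (X w))" by (metis times_ereal.simps(1))
  qed simp
  then show ?thesis by simp
qed

lemma affine_comb:
  assumes "linear A"
  shows "A ((1 - t) *\<^sub>R a + t *\<^sub>R b) + c = (1 - t) *\<^sub>R (A a + c) + t *\<^sub>R (A b + c)"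
proof -
  have "A ((1 - t) *\<^sub>R a + t *\<^sub>R b) = (1 - t) *\<^sub>R A a + t *\<^sub>R A b"
    using assms by (simp add: linear_add linear_scale)
  moreover have "(1 - t) *\<^sub>R c + t *\<^sub>R c = c" by (simp add: scaleR_add_left[symmetric])
  ultimately show ?thesis by (simp add: algebra_simps)
qed

lemma dp_step:
  fixes V :: "'x::euclidean_space \<Rightarrow> 'p::euclidean_space \<Rightarrow> ereal"
    and Lm :: "'w \<Rightarrow> 'x \<Rightarrow> 'u::euclidean_space \<Rightarrow> 'p \<Rightarrow> ereal"
    and g :: "'x \<Rightarrow> 'u \<Rightarrow> 'w \<Rightarrow> 'x" and q :: "'w \<Rightarrow> real"
  assumes S: "finite S" "w0 \<in> S" "\<forall>w\<in>S. q w > 0"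
    and V: "ThetaU V"
    and Lm: "\<forall>w\<in>S. ThetaU (\<lambda>(x, u) p. Lm w x u p)"
    and aff: "\<forall>w\<in>S. \<exists>A c. linear A \<and> (\<forall>x u. g x u w = A (x, u) + c)"
    and KK: "compact KK" "\<forall>x u p. Lm w0 x u p < \<infinity> \<longrightarrow> u \<in> KK"
    and E: "E = (\<lambda>x u p. \<Sum>w\<in>S. ereal (q w) * (Lm w x u p + V (g x u w) p))"
  shows "ThetaU (\<lambda>x p. INF u. E x u p)"
    and "\<And>x p. (INF u. E x u p) < \<infinity> \<Longrightarrow> \<exists>u. \<forall>v. E x u p \<le> E x v p"
    and "\<And>x p u. (INF u. E x u p) < \<infinity> \<Longrightarrow> \<forall>v. E x u p \<le> E x v p \<Longrightarrow>
          (\<forall>w\<in>S. Lm w x u p < \<infinity> \<and> V (g x u w) p < \<infinity>) \<and>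
          GDERIV (\<lambda>p'. real_of_ereal (INF u. E x u p')) p :>
            (\<Sum>w\<in>S. q w *\<^sub>R (grad (\<lambda>p'. real_of_ereal (Lm w x u p')) p
                                 + grad (\<lambda>p'. real_of_ereal (V (g x u w) p')) p))"
proof -
  have Lgood: "good (\<lambda>z. Lm w (fst (fst z)) (snd (fst z)) (snd z))" if "w \<in> S" for w
  proof -
    have "ThetaU (\<lambda>(x, u) p. Lm w x u p)" using Lm that by blast
    note ThetaU_D(1)[OF this]
    moreover have eq: "(\<lambda>(y, p). (\<lambda>(x, u) p. Lm w x u p) y p) = (\<lambda>z. Lm w (fst (fst z)) (snd (fst z)) (snd z))"
      by (rule ext) (simp add: case_prod_beta)
    ultimately show ?thesis by (simp only: eq)
  qed
  have Lninf: "Lm w x u p \<noteq> -\<infinity>" if wS: "w \<in> S" for w x u p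
  proof -
    have "(\<lambda>z. Lm w (fst (fst z)) (snd (fst z)) (snd z)) ((x, u), p) \<noteq> -\<infinity>"
      using Lgood[OF wS] unfolding good_def by blast
    then show ?thesis by simp
  qed
  have Ldom: "Lm w x u p' < \<infinity>" if "w \<in> S" "Lm w x u p < \<infinity>" for w x u p p'
  proof -
    have "(\<lambda>(x, u) p. Lm w x u p) (x, u) p < \<infinity>" using that by simp
    moreover have "ThetaU (\<lambda>(x, u) p. Lm w x u p)" using Lm that(1) by blast
    ultimately have "(\<lambda>(x, u) p. Lm w x u p) (x, u) p' < \<infinity>" by (rule ThetaU_D(2)[rotated])
    then show ?thesis by simp
  qed
  have Ldiff: "(\<lambda>p'. real_of_ereal (Lm w x u p')) differentiable (at p)" if "w \<in> S" "Lm w x u p < \<infinity>" for w x u p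
  proof -
    have "(\<lambda>(x, u) p. Lm w x u p) (x, u) p < \<infinity>" using that by simp
    moreover have "ThetaU (\<lambda>(x, u) p. Lm w x u p)" using Lm that(1) by blast
    ultimately have "(\<lambda>p'. real_of_ereal ((\<lambda>(x, u) p. Lm w x u p) (x, u) p')) differentiable (at p)"
      by (rule ThetaU_D(3)[rotated])
    then show ?thesis by simp
  qed
  have Vgood: "good (\<lambda>(y, p). V y p)" by (rule ThetaU_D(1)[OF V])
  have Vninf: "V y p \<noteq> -\<infinity>" for y p by (rule ThetaU_D(4)[OF V])
  have Vdom: "V y p' < \<infinity>" if "V y p < \<infinity>" for y p p' by (rule ThetaU_D(2)[OF V that])
  have Vdiff: "(\<lambda>p'. real_of_ereal (V y p')) differentiable (at p)" if "V y p < \<infinity>" for y p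
    by (rule ThetaU_D(3)[OF V that])
  have Vcgood: "good (\<lambda>z. V (g (fst (fst z)) (snd (fst z)) w) (snd z))" if wS: "w \<in> S" for w
  proof -
    obtain A c where Ac: "linear A" "\<forall>x u. g x u w = A (x, u) + c" using aff wS by blast
    have "good (\<lambda>z::('x \<times> 'u) \<times> 'p. (\<lambda>(y, p). V y p) ((\<lambda>z::('x \<times> 'u) \<times> 'p. (A (fst z) + c, snd z)) z))"
    proof (rule good_comp[OF Vgood])
      have "bounded_linear A" using Ac(1) linear_conv_bounded_linear by blast
      then have blA: "bounded_linear (\<lambda>z::('x \<times> 'u) \<times> 'p. A (fst z))" by (rule bounded_linear_compose[OF _ bounded_linear_fst])
      have "continuous_on UNIV (\<lambda>z::('x \<times> 'u) \<times> 'p. A (fst z))"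
        by (rule continuous_at_imp_continuous_on, rule ballI, rule linear_continuous_at[OF blA])
      then show "continuous_on UNIV (\<lambda>z::('x \<times> 'u) \<times> 'p. (A (fst z) + c, snd z))"
        by (intro continuous_intros)
      show "(A (fst ((1 - t) *\<^sub>R a + t *\<^sub>R b)) + c, snd ((1 - t) *\<^sub>R a + t *\<^sub>R b)) =
          (1 - t) *\<^sub>R (A (fst a) + c, snd a) + t *\<^sub>R (A (fst b) + c, snd b)" for a b :: "('x \<times> 'u) \<times> 'p" and t
        using affine_comb[OF Ac(1), of t "fst a" "fst b" c] by simp
    qed
    moreover have eq: "(\<lambda>z::('x \<times> 'u) \<times> 'p. (\<lambda>(y, p). V y p) ((\<lambda>z::('x \<times> 'u) \<times> 'p. (A (fst z) + c, snd z)) z)) = (\<lambda>z. V (g (fst (fst z)) (snd (fst z)) w) (snd z))"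
    proof (rule ext)
      fix z :: "('x \<times> 'u) \<times> 'p"
      have "g (fst (fst z)) (snd (fst z)) w = A (fst z) + c" using Ac(2) by simp
      then show "(\<lambda>(y, p). V y p) ((\<lambda>z. (A (fst z) + c, snd z)) z) = V (g (fst (fst z)) (snd (fst z)) w) (snd z)"
        by simp
    qed
    ultimately show ?thesis by (simp only: eq)
  qed
  let ?X = "\<lambda>w x u p. Lm w x u p + V (g x u w) p"
  have Xninf: "?X w x u p \<noteq> -\<infinity>" if "w \<in> S" for w x u p using Lninf[OF that] Vninf add_ninf by blast
  have Efin: "E x u p < \<infinity> \<longleftrightarrow> (\<forall>w\<in>S. Lm w x u p < \<infinity> \<and> V (g x u w) p < \<infinity>)" for x u p
  proof -
    have "E x u p = (\<Sum>w\<in>S. ereal (q w) * ?X w x u p)" by (simp add: E)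
    moreover have "(\<Sum>w\<in>S. ereal (q w) * ?X w x u p) < \<infinity> \<longleftrightarrow> (\<forall>w\<in>S. ?X w x u p < \<infinity>)"
      by (rule sum_lt_inf[OF S(1)]) (use S(3) Xninf in blast)
    ultimately have "E x u p < \<infinity> \<longleftrightarrow> (\<forall>w\<in>S. ?X w x u p < \<infinity>)" by simp
    also have "\<dots> \<longleftrightarrow> (\<forall>w\<in>S. Lm w x u p < \<infinity> \<and> V (g x u w) p < \<infinity>)"
      using Lninf Vninf by (simp add: add_lt_inf_iff)
    finally show ?thesis .
  qed
  have gE: "good (\<lambda>((x, u), p). E x u p)"
  proof -
    have "good (\<lambda>z. \<Sum>w\<in>S. ereal (q w) * (Lm w (fst (fst z)) (snd (fst z)) (snd z) + V (g (fst (fst z)) (snd (fst z)) w) (snd z)))"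
    proof (rule good_sum[OF S(1)])
      show "\<forall>w\<in>S. 0 < q w \<and> good (\<lambda>z. Lm w (fst (fst z)) (snd (fst z)) (snd z) + V (g (fst (fst z)) (snd (fst z)) w) (snd z))"
        using S(3) good_add[OF Lgood Vcgood] by blast
    qed
    moreover have "(\<lambda>((x, u), p). E x u p) = (\<lambda>z. \<Sum>w\<in>S. ereal (q w) * (Lm w (fst (fst z)) (snd (fst z)) (snd z) + V (g (fst (fst z)) (snd (fst z)) w) (snd z)))"
      unfolding E by (rule ext) (simp add: case_prod_beta)
    ultimately show ?thesis by (simp only:)
  qed
  have Edom: "E x u p' < \<infinity>" if hE: "E x u p < \<infinity>" for x u p p'
  proof -
    have "\<forall>w\<in>S. Lm w x u p < \<infinity> \<and> V (g x u w) p < \<infinity>" using hE Efin[of x u p] by simp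
    then have "\<forall>w\<in>S. Lm w x u p' < \<infinity> \<and> V (g x u w) p' < \<infinity>" using Ldom Vdom by blast
    then show ?thesis using Efin[of x u p'] by simp
  qed
  have Egrad: "GDERIV (\<lambda>p'. real_of_ereal (E x u p')) p :>
            (\<Sum>w\<in>S. q w *\<^sub>R (grad (\<lambda>p'. real_of_ereal (Lm w x u p')) p
                                 + grad (\<lambda>p'. real_of_ereal (V (g x u w) p')) p))"
    if hE: "E x u p < \<infinity>" for x u p
  proof -
    have fin: "\<forall>w\<in>S. Lm w x u p' < \<infinity> \<and> V (g x u w) p' < \<infinity>" for p'
      using Edom[OF hE] Efin[of x u p'] by simp
    have "real_of_ereal (E x u p') = (\<Sum>w\<in>S. q w * (real_of_ereal (Lm w x u p') + real_of_ereal (V (g x u w) p')))" for p'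
    proof -
      have "real_of_ereal (E x u p') = (\<Sum>w\<in>S. q w * real_of_ereal (?X w x u p'))"
        unfolding E
      proof (rule sum_real_eq)
        show "\<forall>w\<in>S. ?X w x u p' \<noteq> -\<infinity> \<and> ?X w x u p' < \<infinity>"
          using fin[of p'] Xninf Lninf Vninf by (simp add: add_lt_inf_iff)
      qed
      also have "\<dots> = (\<Sum>w\<in>S. q w * (real_of_ereal (Lm w x u p') + real_of_ereal (V (g x u w) p')))"
        using fin[of p'] Lninf Vninf by (intro sum.cong refl) (simp add: add_real)
      finally show ?thesis .
    qed
    then have eq: "(\<lambda>p'. real_of_ereal (E x u p')) = (\<lambda>p'. \<Sum>w\<in>S. q w * (real_of_ereal (Lm w x u p') + real_of_ereal (V (g x u w) p')))"
      by (simp add: fun_eq_iff)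
    have "GDERIV (\<lambda>p'. \<Sum>w\<in>S. q w * (real_of_ereal (Lm w x u p') + real_of_ereal (V (g x u w) p'))) p :>
            (\<Sum>w\<in>S. q w *\<^sub>R (grad (\<lambda>p'. real_of_ereal (Lm w x u p')) p
                                 + grad (\<lambda>p'. real_of_ereal (V (g x u w) p')) p))"
    proof (rule gderiv_sum[OF S(1)])
      fix w assume w: "w \<in> S"
      show "GDERIV (\<lambda>p'. real_of_ereal (Lm w x u p') + real_of_ereal (V (g x u w) p')) p :>
          grad (\<lambda>p'. real_of_ereal (Lm w x u p')) p + grad (\<lambda>p'. real_of_ereal (V (g x u w) p')) p"
        using fin[of p] w by (intro GDERIV_add grad_exists Ldiff Vdiff) auto
    qed
    then show ?thesis by (simp only: eq)
  qed
  have Ediff: "(\<lambda>p'. real_of_ereal (E x u p')) differentiable (at p)" if "E x u p < \<infinity>" for x u p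
    using Egrad[OF that] unfolding gderiv_def differentiable_def by blast
  have EKK: "u \<in> KK" if hE: "E x u p < \<infinity>" for x u p
  proof -
    have "Lm w0 x u p < \<infinity>" using hE Efin[of x u p] S(2) by simp
    then show ?thesis using KK(2) by blast
  qed
  have Pprem: "good (\<lambda>((y, u), p). E y u p)" "\<And>y u p p'. E y u p < \<infinity> \<Longrightarrow> E y u p' < \<infinity>"
    "\<And>y u p. E y u p < \<infinity> \<Longrightarrow> (\<lambda>p'. real_of_ereal (E y u p')) differentiable (at p)"
    "compact KK" "\<And>y u p. E y u p < \<infinity> \<Longrightarrow> u \<in> KK"
    using gE Edom Ediff KK(1) EKK by auto
  have P1: "ThetaU (\<lambda>x p. INF u. E x u p)" by (rule pmin(1)[OF Pprem])
  have P2: "\<exists>u. \<forall>v. E x u p \<le> E x v p" if "(INF u. E x u p) < \<infinity>" for x p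
    by (rule pmin(2)[OF Pprem that])
  have P3: "GDERIV (\<lambda>p'. real_of_ereal (INF u. E x u p')) p :> D"
    if "(INF u. E x u p) < \<infinity>" "\<forall>v. E x u p \<le> E x v p" "GDERIV (\<lambda>p'. real_of_ereal (E x u p')) p :> D" for x p u D
    by (rule pmin(3)[OF Pprem that])
  note P = P1 P2 P3
  show "ThetaU (\<lambda>x p. INF u. E x u p)" by (rule P(1))
  show "\<exists>u. \<forall>v. E x u p \<le> E x v p" if "(INF u. E x u p) < \<infinity>" for x p using P(2) that by blast
  show "(\<forall>w\<in>S. Lm w x u p < \<infinity> \<and> V (g x u w) p < \<infinity>) \<and>
          GDERIV (\<lambda>p'. real_of_ereal (INF u. E x u p')) p :>
            (\<Sum>w\<in>S. q w *\<^sub>R (grad (\<lambda>p'. real_of_ereal (Lm w x u p')) p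
                                 + grad (\<lambda>p'. real_of_ereal (V (g x u w) p')) p))"
    if h1: "(INF u. E x u p) < \<infinity>" and h2: "\<forall>v. E x u p \<le> E x v p" for x p u
  proof -
    have "E x u p \<le> (INF v. E x v p)" using h2 by (simp add: le_INF_iff)
    then have "E x u p < \<infinity>" using h1 by (rule le_less_trans)
    then show ?thesis using Efin[of x u p] Egrad[of x u p] P(3)[OF h1 h2] by simp
  qed
qed



lemma dp_mono:
  assumes "\<And>t x u w p. L1 t x u w p \<le> L2 t x u w p" "\<And>x p. K1 x p \<le> K2 x p"
  shows "dp M W f L1 K1 T k x p \<le> dp M W f L2 K2 T k x p"
proof (induction k arbitrary: x p)
  case 0
  then show ?case using assms(2) by simp
next
  case (Suc k)
  show ?case unfolding dp.simps
  proof (rule INF_mono')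
    fix u
    show "Eexp M (W (T - Suc k + 1)) (\<lambda>w. L1 (T - Suc k) x u w p + dp M W f L1 K1 T k (f (T - Suc k) x u w) p)
       \<le> Eexp M (W (T - Suc k + 1)) (\<lambda>w. L2 (T - Suc k) x u w p + dp M W f L2 K2 T k (f (T - Suc k) x u w) p)"
      unfolding Eexp_def
    proof (rule sum_mono)
      fix w
      have "L1 (T - Suc k) x u w p + dp M W f L1 K1 T k (f (T - Suc k) x u w) p
         \<le> L2 (T - Suc k) x u w p + dp M W f L2 K2 T k (f (T - Suc k) x u w) p"
        by (rule add_mono[OF assms(1) Suc.IH])
      moreover have "0 \<le> ereal (measure M (W (T - Suc k + 1) -` {w} \<inter> space M))" by simp
      ultimately show "ereal (measure M (W (T - Suc k + 1) -` {w} \<inter> space M)) *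
          (L1 (T - Suc k) x u w p + dp M W f L1 K1 T k (f (T - Suc k) x u w) p)
         \<le> ereal (measure M (W (T - Suc k + 1) -` {w} \<inter> space M)) *
          (L2 (T - Suc k) x u w p + dp M W f L2 K2 T k (f (T - Suc k) x u w) p)"
        by (rule ereal_mult_left_mono)
    qed
  qed
qed

lemma moreau_le: "moreau \<mu> g p \<le> g p"
  unfolding moreau_def by (rule INF_lower2[of p]) auto

lemma moreau_fin: "moreau \<mu> g p < \<infinity> \<Longrightarrow> \<exists>p'. g p' < \<infinity>"
proof -
  assume "moreau \<mu> g p < \<infinity>"
  then have "\<exists>p'\<in>UNIV. g p' + ereal ((norm (p - p'))\<^sup>2 / (2 * \<mu>)) < \<infinity>"
    unfolding moreau_def by (subst INF_less_iff[symmetric])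
  then obtain p' where "g p' + ereal ((norm (p - p'))\<^sup>2 / (2 * \<mu>)) < \<infinity>" by blast
  then have "g p' < \<infinity>" by (cases "g p'") auto
  then show ?thesis by blast
qed

lemma Supp_ne:
  assumes "prob_space M" "finite_support M X"
  shows "Supp M X \<noteq> {}"
proof
  assume e: "Supp M X = {}"
  have "AE \<omega> in M. X \<omega> \<in> Supp M X" using assms(2) unfolding finite_support_def by blast
  then have "AE \<omega> in M. False" using e by simp
  then show False using prob_space.AE_False[OF assms(1)] by blast
qed

lemma sum_nPinf:
  assumes "\<forall>w\<in>S. X w < \<infinity>" "\<forall>w\<in>S. q w \<ge> 0"
  shows "(\<Sum>w\<in>S. ereal (q w) * X w) < \<infinity>"
proof -
  have "ereal (q w) * X w \<noteq> \<infinity>" if "w \<in> S" for w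
    using assms that by (cases "X w") (auto simp: ereal_mult_infty)
  then show ?thesis using sum_Pinfty[of "\<lambda>w. ereal (q w) * X w" S] by (simp add: less_top[symmetric] top_ereal_def)
qed

lemma sum_each_lt:
  fixes X :: "'a \<Rightarrow> ereal"
  assumes "sum X S < \<infinity>" "w \<in> S" "finite S"
  shows "X w < \<infinity>"
  using sum_Pinfty[of X S] assms by (auto simp: less_top[symmetric] top_ereal_def)

lemma sum_ninf':
  fixes X :: "'a \<Rightarrow> ereal"
  assumes "\<forall>w\<in>S. X w \<noteq> -\<infinity>"
  shows "sum X S \<noteq> -\<infinity>"
  using assms
proof (induction S rule: infinite_finite_induct)
  case (insert x F)
  then show ?case using add_ninf by simp
qed auto

lemma traj_agree:
  assumes "nonanticipative T \<pi>" "\<forall>i\<in>{1..s}. ws i = ws' i" "s \<le> T"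
  shows "traj f x0 \<pi> ws s = traj f x0 \<pi> ws' s"
  using assms(2,3)
proof (induction s)
  case 0
  then show ?case by simp
next
  case (Suc s)
  have a: "\<forall>i\<in>{1..s}. ws i = ws' i" using Suc.prems by auto
  have "\<pi> s ws = \<pi> s ws'" using assms(1) a Suc.prems(2) unfolding nonanticipative_def by auto
  moreover have "ws (Suc s) = ws' (Suc s)" using Suc.prems by auto
  ultimately show ?case using Suc.IH[OF a] Suc.prems(2) by simp
qed



lemma add_lt_D: "(a::ereal) + b < \<infinity> \<Longrightarrow> a < \<infinity> \<and> b < \<infinity>"
  by (cases a; cases b) auto

lemma add_lt_inf: "(a::ereal) < \<infinity> \<Longrightarrow> b < \<infinity> \<Longrightarrow> a + b < \<infinity>"
  by (cases a; cases b) auto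

theorem theorem3:
  fixes M :: "'a measure" and W :: "nat \<Rightarrow> 'a \<Rightarrow> 'w::euclidean_space"
    and f :: "nat \<Rightarrow> 'x::euclidean_space \<Rightarrow> 'u::euclidean_space \<Rightarrow> 'w \<Rightarrow> 'x"
    and L :: "nat \<Rightarrow> 'x \<Rightarrow> 'u \<Rightarrow> 'w \<Rightarrow> 'p::euclidean_space \<Rightarrow> ereal"
    and K :: "'x \<Rightarrow> 'p \<Rightarrow> ereal" and x0 :: 'x and Pad :: "'p set"
    and T :: nat and \<mu> :: real
  assumes T_pos: "T \<ge> 1" and mu_pos: "\<mu> > 0"
    and prob: "prob_space M"
    and L_range: "\<forall>t<T. \<forall>x u w p. L t x u w p \<noteq> -\<infinity>"
    and K_range: "\<forall>x p. K x p \<noteq> -\<infinity>"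
    and A1_indep: "prob_space.indep_vars M (\<lambda>_. borel) W {1..T}"
    and A1_fin: "\<forall>t\<in>{1..T}. finite_support M (W t)"
    and A2i: "\<exists>p\<in>Pad. Phi M W f L K T x0 p < \<infinity>"
    and A2ii: "\<forall>t<T. \<forall>w. \<exists>A c. linear A \<and> (\<forall>x u. f t x u w = A (x, u) + c)"
    and A2iii: "\<forall>t<T. \<forall>w\<in>Supp M (W (Suc t)). GammaK_cl (\<lambda>x u p. L t x u w p)"
    and A2iv: "Gamma_cl K"
    and A4: "\<exists>PP. compact PP
               \<and> (\<forall>t<T. \<forall>w\<in>Supp M (W (Suc t)). \<forall>x u. {p. L t x u w p < \<infinity>} \<subseteq> PP)
               \<and> (\<forall>x. {p. K x p < \<infinity>} \<subseteq> PP)"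
  shows
    "(\<forall>t\<le>T. \<forall>x p. Vmu \<mu> M W f L K T t x p \<le> Vfun M W f L K T t x p)
     \<and> (\<forall>t\<le>T. proper2 (Vmu \<mu> M W f L K T t) \<and> Theta_cl UNIV (Vmu \<mu> M W f L K T t))
     \<and> (\<forall>(x, p)\<in>edom2 (Vmu \<mu> M W f L K T T).
          (\<lambda>p'. real_of_ereal (Kmu \<mu> K x p')) differentiable (at p)
          \<and> GDERIV (\<lambda>p'. real_of_ereal (Vmu \<mu> M W f L K T T x p')) p
              :> grad (\<lambda>p'. real_of_ereal (Kmu \<mu> K x p')) p)
     \<and> (\<forall>t<T. \<forall>(x, p)\<in>edom2 (Vmu \<mu> M W f L K T t).
          {u. \<forall>v. Eexp M (W (Suc t))
                    (\<lambda>w. Lmu \<mu> L t x u w p + Vmu \<mu> M W f L K T (Suc t) (f t x u w) p)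
                 \<le> Eexp M (W (Suc t))
                    (\<lambda>w. Lmu \<mu> L t x v w p + Vmu \<mu> M W f L K T (Suc t) (f t x v w) p)} \<noteq> {}
          \<and> (\<forall>us\<in>{u. \<forall>v. Eexp M (W (Suc t))
                    (\<lambda>w. Lmu \<mu> L t x u w p + Vmu \<mu> M W f L K T (Suc t) (f t x u w) p)
                 \<le> Eexp M (W (Suc t))
                    (\<lambda>w. Lmu \<mu> L t x v w p + Vmu \<mu> M W f L K T (Suc t) (f t x v w) p)}.
               (\<forall>w\<in>Supp M (W (Suc t)).
                  (\<lambda>p'. real_of_ereal (Lmu \<mu> L t x us w p')) differentiable (at p)
                  \<and> (\<lambda>p'. real_of_ereal (Vmu \<mu> M W f L K T (Suc t) (f t x us w) p')) differentiable (at p))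
               \<and> GDERIV (\<lambda>p'. real_of_ereal (Vmu \<mu> M W f L K T t x p')) p
                   :> Evec M (W (Suc t))
                        (\<lambda>w. grad (\<lambda>p'. real_of_ereal (Lmu \<mu> L t x us w p')) p
                             + grad (\<lambda>p'. real_of_ereal (Vmu \<mu> M W f L K T (Suc t) (f t x us w) p')) p)))"
proof -
  interpret P: prob_space M by (rule prob)
  let ?V = "Vmu \<mu> M W f L K T"
  let ?S = "\<lambda>t. Supp M (W t)"
  let ?q = "\<lambda>t w. measure M (W t -` {w} \<inter> space M)"
  let ?E = "\<lambda>t x u p. Eexp M (W (Suc t)) (\<lambda>w. Lmu \<mu> L t x u w p + ?V (Suc t) (f t x u w) p)"
  obtain PP where PP: "compact PP" "\<forall>t<T. \<forall>w\<in>?S (Suc t). \<forall>x u. {p. L t x u w p < \<infinity>} \<subseteq> PP"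
    "\<forall>x. {p. K x p < \<infinity>} \<subseteq> PP" using A4 by blast
  have Sfin: "finite (?S t)" if "t \<in> {1..T}" for t using A1_fin that unfolding finite_support_def by blast
  have Sne: "?S t \<noteq> {}" if "t \<in> {1..T}" for t using Supp_ne[OF prob] A1_fin that by blast
  have qpos: "?q t w > 0" if "w \<in> ?S t" for t w using that unfolding Supp_def by simp
  have VT: "?V T = Kmu \<mu> K" unfolding Vmu_def by simp
  have Vt: "?V t = (\<lambda>x p. INF u. ?E t x u p)" if tT: "t < T" for t
  proof -
    have e: "T - t = Suc (T - Suc t)" using tT by simp
    have e2: "T - Suc (T - Suc t) = t" using tT by simp
    show ?thesis unfolding Vmu_def e dp.simps e2 by simp
  qed
  have LmT: "ThetaU (\<lambda>(x, u) p. Lmu \<mu> L t x u w p)" if tw: "t < T" "w \<in> ?S (Suc t)" for t w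
  proof -
    have gk: "GammaK_cl (\<lambda>x u p. L t x u w p)" using A2iii tw by blast
    have g1: "Gamma_cl (\<lambda>(x, u) p. L t x u w p)" using gk unfolding GammaK_cl_def by blast
    have g2: "p \<in> PP" if "(\<lambda>(x, u) p. L t x u w p) y p < \<infinity>" for y p
    proof -
      obtain x u where y: "y = (x, u)" by fastforce
      then have "L t x u w p < \<infinity>" using that by simp
      then show ?thesis using PP(2) tw by blast
    qed
    have th: "ThetaU (\<lambda>y p. moreau \<mu> ((\<lambda>(x, u) p. L t x u w p) y) p)"
      by (rule moreau_ThetaU[OF g1 PP(1) g2 mu_pos])
    have eq: "(\<lambda>y p. moreau \<mu> ((\<lambda>(x, u) p. L t x u w p) y) p) = (\<lambda>(x, u) p. Lmu \<mu> L t x u w p)"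
    proof (rule ext)
      fix y :: "'x \<times> 'u"
      obtain x u where y: "y = (x, u)" by fastforce
      show "(\<lambda>p. moreau \<mu> ((\<lambda>(x, u) p. L t x u w p) y) p) = (\<lambda>(x, u) p. Lmu \<mu> L t x u w p) y"
        unfolding y by (simp add: Lmu_def)
    qed
    show ?thesis using th unfolding eq .
  qed
  have KmT: "ThetaU (Kmu \<mu> K)"
  proof -
    have g2: "p \<in> PP" if "K y p < \<infinity>" for y p using that PP(3) by auto
    have th: "ThetaU (\<lambda>y p. moreau \<mu> (K y) p)" by (rule moreau_ThetaU[OF A2iv PP(1) g2 mu_pos])
    have eq: "(\<lambda>y p. moreau \<mu> (K y) p) = Kmu \<mu> K" by (rule ext) (simp add: Kmu_def)
    show ?thesis using th unfolding eq .
  qed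
  have step: "ThetaU (?V t) \<and> (\<forall>x p. ?V t x p < \<infinity> \<longrightarrow> (\<exists>u. \<forall>v. ?E t x u p \<le> ?E t x v p))
    \<and> (\<forall>x p u. ?V t x p < \<infinity> \<longrightarrow> (\<forall>v. ?E t x u p \<le> ?E t x v p) \<longrightarrow>
        (\<forall>w\<in>?S (Suc t). Lmu \<mu> L t x u w p < \<infinity> \<and> ?V (Suc t) (f t x u w) p < \<infinity>) \<and>
        GDERIV (\<lambda>p'. real_of_ereal (?V t x p')) p :>
          Evec M (W (Suc t)) (\<lambda>w. grad (\<lambda>p'. real_of_ereal (Lmu \<mu> L t x u w p')) p
                             + grad (\<lambda>p'. real_of_ereal (?V (Suc t) (f t x u w) p')) p))"
    if tT: "t < T" and VS: "ThetaU (?V (Suc t))" for t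
  proof -
    have St: "Suc t \<in> {1..T}" using tT by simp
    obtain w0 where w0: "w0 \<in> ?S (Suc t)" using Sne[OF St] by auto
    have gk: "GammaK_cl (\<lambda>x u p. L t x u w0 p)" using A2iii tT w0 by blast
    obtain KK where KK: "compact KK" "\<forall>x p. {u. L t x u w0 p < \<infinity>} \<subseteq> KK"
      using gk unfolding GammaK_cl_def by blast
    have KK2': "u \<in> KK" if hl: "Lmu \<mu> L t x u w0 p < \<infinity>" for x u p
    proof -
      obtain p' where "L t x u w0 p' < \<infinity>" using moreau_fin[of \<mu> "L t x u w0" p] hl unfolding Lmu_def by blast
      then show ?thesis using KK(2) by blast
    qed
    have KK2: "\<forall>x u p. Lmu \<mu> L t x u w0 p < \<infinity> \<longrightarrow> u \<in> KK" using KK2' by blast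
    have p1: "finite (?S (Suc t))" by (rule Sfin[OF St])
    have p3: "\<forall>w\<in>?S (Suc t). ?q (Suc t) w > 0" using qpos by blast
    have p5: "\<forall>w\<in>?S (Suc t). ThetaU (\<lambda>(x, u) p. Lmu \<mu> L t x u w p)" using LmT tT by blast
    have p6: "\<forall>w\<in>?S (Suc t). \<exists>A c. linear A \<and> (\<forall>x u. f t x u w = A (x, u) + c)" using A2ii tT by blast
    have p9: "?E t = (\<lambda>x u p. \<Sum>w\<in>?S (Suc t). ereal (?q (Suc t) w) * (Lmu \<mu> L t x u w p + ?V (Suc t) (f t x u w) p))"
      by (simp add: Eexp_def)
    note D = dp_step[OF p1 w0 p3 VS p5 p6 KK(1) KK2 p9]
    have D1: "ThetaU (?V t)" using D(1) Vt[OF tT] by simp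
    show ?thesis
    proof (intro conjI allI impI)
      show "ThetaU (?V t)" by (rule D1)
      show "\<exists>u. \<forall>v. ?E t x u p \<le> ?E t x v p" if "?V t x p < \<infinity>" for x p
        using D(2) that Vt[OF tT] by simp
      fix x p u assume h1: "?V t x p < \<infinity>" and h2: "\<forall>v. ?E t x u p \<le> ?E t x v p"
      have h1': "(INF u. ?E t x u p) < \<infinity>" using h1 Vt[OF tT] by simp
      note D3 = D(3)[OF h1' h2]
      show "\<forall>w\<in>?S (Suc t). Lmu \<mu> L t x u w p < \<infinity> \<and> ?V (Suc t) (f t x u w) p < \<infinity>"
        using D3 by blast
      show "GDERIV (\<lambda>p'. real_of_ereal (?V t x p')) p :>
          Evec M (W (Suc t)) (\<lambda>w. grad (\<lambda>p'. real_of_ereal (Lmu \<mu> L t x u w p')) p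
                             + grad (\<lambda>p'. real_of_ereal (?V (Suc t) (f t x u w) p')) p)"
        using D3 Vt[OF tT] unfolding Evec_def by simp
    qed
  qed
  have allk: "ThetaU (?V (T - k))" if "k \<le> T" for k
    using that
  proof (induction k)
    case 0
    then show ?case using KmT VT by simp
  next
    case (Suc k)
    have tT: "T - Suc k < T" using Suc.prems by simp
    have e: "Suc (T - Suc k) = T - k" using Suc.prems by simp
    have "ThetaU (?V (Suc (T - Suc k)))" using Suc.IH Suc.prems e by simp
    then show ?case using step[OF tT] by blast
  qed
  have allT: "ThetaU (?V t)" if "t \<le> T" for t
    using allk[of "T - t"] that by simp
  obtain p0 where p0: "Phi M W f L K T x0 p0 < \<infinity>" using A2i by blast
  let ?PS = "Pi\<^sub>E {1..T} ?S"
  let ?J = "\<lambda>ws. measure M {\<omega>\<in>space M. \<forall>i\<in>{1..T}. W i \<omega> = ws i}"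
  have "\<exists>\<pi>\<in>{\<pi>. nonanticipative T \<pi>}. (\<Sum>ws\<in>?PS. ereal (?J ws) * path_cost f L K T x0 \<pi> ws p0) < \<infinity>"
    using p0 unfolding Phi_def by (subst INF_less_iff[symmetric])
  then obtain \<pi> where \<pi>: "nonanticipative T \<pi>"
    and sumfin: "(\<Sum>ws\<in>?PS. ereal (?J ws) * path_cost f L K T x0 \<pi> ws p0) < \<infinity>" by blast
  have PSfin: "finite ?PS" using Sfin by (intro finite_PiE) auto
  have indep: "P.indep_sets (\<lambda>i. {W i -` A \<inter> space M | A. A \<in> sets borel}) {1..T}"
    using A1_indep unfolding P.indep_vars_def2 by blast
  have Jpos: "?J ws > 0" if ws: "ws \<in> ?PS" for ws
  proof -
    have "P.prob (\<Inter>j\<in>{1..T}. W j -` {ws j} \<inter> space M) = (\<Prod>j\<in>{1..T}. P.prob (W j -` {ws j} \<inter> space M))"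
      by (rule P.indep_setsD[OF indep]) (use T_pos in auto)
    moreover have "(\<Inter>j\<in>{1..T}. W j -` {ws j} \<inter> space M) = {\<omega>\<in>space M. \<forall>i\<in>{1..T}. W i \<omega> = ws i}"
      using T_pos by auto
    moreover have "(\<Prod>j\<in>{1..T}. P.prob (W j -` {ws j} \<inter> space M)) > 0"
    proof (rule prod_pos)
      fix j assume "j \<in> {1..T}"
      then have "ws j \<in> ?S j" using ws by (auto simp: PiE_iff)
      then show "P.prob (W j -` {ws j} \<inter> space M) > 0" using qpos by blast
    qed
    ultimately show ?thesis by simp
  qed
  have pcfin: "path_cost f L K T x0 \<pi> ws p0 < \<infinity>" if ws: "ws \<in> ?PS" for ws
  proof -
    have "ereal (?J ws) * path_cost f L K T x0 \<pi> ws p0 < \<infinity>"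
      by (rule sum_each_lt[OF sumfin ws PSfin])
    then show ?thesis using Jpos[OF ws] by (cases "path_cost f L K T x0 \<pi> ws p0") auto
  qed
  have Lfin: "L t (traj f x0 \<pi> ws t) (\<pi> t ws) (ws (Suc t)) p0 < \<infinity>" if ws: "ws \<in> ?PS" and tT: "t < T" for ws t
  proof -
    have "(\<Sum>t<T. L t (traj f x0 \<pi> ws t) (\<pi> t ws) (ws (Suc t)) p0) + K (traj f x0 \<pi> ws T) p0 < \<infinity>"
      using pcfin[OF ws] unfolding path_cost_def .
    then have "(\<Sum>t<T. L t (traj f x0 \<pi> ws t) (\<pi> t ws) (ws (Suc t)) p0) < \<infinity>" by (simp add: add_lt_D)
    then show ?thesis using sum_each_lt[of _ "{..<T}" t] tT by simp
  qed
  have Kfin: "K (traj f x0 \<pi> ws T) p0 < \<infinity>" if ws: "ws \<in> ?PS" for ws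
  proof -
    have "(\<Sum>t<T. L t (traj f x0 \<pi> ws t) (\<pi> t ws) (ws (Suc t)) p0) + K (traj f x0 \<pi> ws T) p0 < \<infinity>"
      using pcfin[OF ws] unfolding path_cost_def .
    then show ?thesis by (simp add: add_lt_D)
  qed
  have C: "\<forall>ws\<in>?PS. ?V (T - k) (traj f x0 \<pi> ws (T - k)) p0 < \<infinity>" if "k \<le> T" for k
    using that
  proof (induction k)
    case 0
    show ?case
    proof
      fix ws assume ws: "ws \<in> ?PS"
      have "Kmu \<mu> K (traj f x0 \<pi> ws T) p0 \<le> K (traj f x0 \<pi> ws T) p0" unfolding Kmu_def by (rule moreau_le)
      then have "Kmu \<mu> K (traj f x0 \<pi> ws T) p0 < \<infinity>" using Kfin[OF ws] by (rule le_less_trans)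
      then show "?V (T - 0) (traj f x0 \<pi> ws (T - 0)) p0 < \<infinity>" using VT by simp
    qed
  next
    case (Suc k)
    define t where "t = T - Suc k"
    have tT: "t < T" using Suc.prems unfolding t_def by simp
    have e: "Suc t = T - k" using Suc.prems unfolding t_def by simp
    have IH: "\<forall>ws\<in>?PS. ?V (Suc t) (traj f x0 \<pi> ws (Suc t)) p0 < \<infinity>" using Suc.IH Suc.prems e by simp
    show ?case unfolding t_def[symmetric]
    proof
      fix ws assume ws: "ws \<in> ?PS"
      let ?x = "traj f x0 \<pi> ws t"
      have terms: "Lmu \<mu> L t ?x (\<pi> t ws) w p0 + ?V (Suc t) (f t ?x (\<pi> t ws) w) p0 < \<infinity>"
        if w: "w \<in> ?S (Suc t)" for w
      proof -
        define ws' where "ws' = ws(Suc t := w)"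
        have ws': "ws' \<in> ?PS"
        proof -
          have "Suc t \<in> {1..T}" using tT by simp
          then have "insert (Suc t) {1..T} = {1..T}" by blast
          moreover have "ws' \<in> Pi\<^sub>E (insert (Suc t) {1..T}) ?S" unfolding ws'_def
            by (rule PiE_fun_upd[OF w ws])
          ultimately show ?thesis by simp
        qed
        have agree: "\<forall>i\<in>{1..t}. ws i = ws' i" unfolding ws'_def by simp
        have tr: "traj f x0 \<pi> ws t = traj f x0 \<pi> ws' t" by (rule traj_agree[OF \<pi> agree]) (use tT in simp)
        have pe: "\<pi> t ws = \<pi> t ws'" using \<pi> agree tT unfolding nonanticipative_def by blast
        have w': "ws' (Suc t) = w" unfolding ws'_def by simp
        have a: "Lmu \<mu> L t ?x (\<pi> t ws) w p0 < \<infinity>"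
        proof -
          have "Lmu \<mu> L t ?x (\<pi> t ws) w p0 \<le> L t ?x (\<pi> t ws) w p0" unfolding Lmu_def by (rule moreau_le)
          moreover have "L t ?x (\<pi> t ws) w p0 < \<infinity>" using Lfin[OF ws' tT] tr pe w' by simp
          ultimately show ?thesis by (rule le_less_trans)
        qed
        have b: "?V (Suc t) (f t ?x (\<pi> t ws) w) p0 < \<infinity>"
        proof -
          have "f t ?x (\<pi> t ws) w = traj f x0 \<pi> ws' (Suc t)" using tr pe w' by simp
          then show ?thesis using IH ws' by simp
        qed
        show ?thesis by (rule add_lt_inf[OF a b])
      qed
      have "?V t ?x p0 \<le> ?E t ?x (\<pi> t ws) p0" unfolding Vt[OF tT] by (rule INF_lower) simp
      moreover have "?E t ?x (\<pi> t ws) p0 < \<infinity>"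
        unfolding Eexp_def
      proof (rule sum_nPinf)
        show "\<forall>w\<in>?S (Suc t). Lmu \<mu> L t ?x (\<pi> t ws) w p0 + ?V (Suc t) (f t ?x (\<pi> t ws) w) p0 < \<infinity>"
          using terms by blast
        show "\<forall>w\<in>?S (Suc t). 0 \<le> ?q (Suc t) w" by simp
      qed
      ultimately show "?V t ?x p0 < \<infinity>" by (rule le_less_trans)
    qed
  qed
  have PSne: "?PS \<noteq> {}" using Sne by (simp add: PiE_eq_empty_iff)
  then obtain ws0 where ws0: "ws0 \<in> ?PS" by blast
  have domne: "edom2 (?V t) \<noteq> {}" if "t \<le> T" for t
  proof -
    have "?V t (traj f x0 \<pi> ws0 t) p0 < \<infinity>" using C[of "T - t"] that ws0 by simp
    then show ?thesis unfolding edom2_def by blast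
  qed
  show ?thesis
  proof (intro conjI)
    show "\<forall>t\<le>T. \<forall>x p. ?V t x p \<le> Vfun M W f L K T t x p"
    proof (intro allI impI)
      fix t x p
      show "?V t x p \<le> Vfun M W f L K T t x p" unfolding Vmu_def Vfun_def
      proof (rule dp_mono)
        show "Lmu \<mu> L t' x u w p \<le> L t' x u w p" for t' x u w p unfolding Lmu_def by (rule moreau_le)
        show "Kmu \<mu> K x p \<le> K x p" for x p unfolding Kmu_def by (rule moreau_le)
      qed
    qed
    show "\<forall>t\<le>T. proper2 (?V t) \<and> Theta_cl UNIV (?V t)"
    proof (intro allI impI conjI)
      fix t assume tT: "t \<le> T"
      show "Theta_cl UNIV (?V t)" by (rule ThetaU_Theta[OF allT[OF tT]])
      show "proper2 (?V t)" unfolding proper2_def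
        using ThetaU_D(4)[OF allT[OF tT]] domne[OF tT] by blast
    qed
    show "\<forall>(x, p)\<in>edom2 (?V T).
          (\<lambda>p'. real_of_ereal (Kmu \<mu> K x p')) differentiable (at p)
          \<and> GDERIV (\<lambda>p'. real_of_ereal (?V T x p')) p :> grad (\<lambda>p'. real_of_ereal (Kmu \<mu> K x p')) p"
    proof (rule ballI)
      fix z assume hz: "z \<in> edom2 (?V T)"
      obtain x p where z: "z = (x, p)" by fastforce
      have fin: "Kmu \<mu> K x p < \<infinity>" using hz VT unfolding z edom2_def by simp
      have d: "(\<lambda>p'. real_of_ereal (Kmu \<mu> K x p')) differentiable (at p)" by (rule ThetaU_D(3)[OF KmT fin])
      show "case z of (x, p) \<Rightarrow> (\<lambda>p'. real_of_ereal (Kmu \<mu> K x p')) differentiable (at p)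
          \<and> GDERIV (\<lambda>p'. real_of_ereal (?V T x p')) p :> grad (\<lambda>p'. real_of_ereal (Kmu \<mu> K x p')) p"
        unfolding z case_prod_conv using d grad_exists[OF d] VT by simp
    qed
    show "\<forall>t<T. \<forall>(x, p)\<in>edom2 (?V t).
          {u. \<forall>v. ?E t x u p \<le> ?E t x v p} \<noteq> {}
          \<and> (\<forall>us\<in>{u. \<forall>v. ?E t x u p \<le> ?E t x v p}.
               (\<forall>w\<in>?S (Suc t).
                  (\<lambda>p'. real_of_ereal (Lmu \<mu> L t x us w p')) differentiable (at p)
                  \<and> (\<lambda>p'. real_of_ereal (?V (Suc t) (f t x us w) p')) differentiable (at p))
               \<and> GDERIV (\<lambda>p'. real_of_ereal (?V t x p')) p
                   :> Evec M (W (Suc t))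
                        (\<lambda>w. grad (\<lambda>p'. real_of_ereal (Lmu \<mu> L t x us w p')) p
                             + grad (\<lambda>p'. real_of_ereal (?V (Suc t) (f t x us w) p')) p))"
    proof (intro allI impI ballI)
      fix t z assume tT: "t < T" and hz: "z \<in> edom2 (?V t)"
      obtain x p where z: "z = (x, p)" by fastforce
      have fin: "?V t x p < \<infinity>" using hz unfolding z edom2_def by simp
      have VS: "ThetaU (?V (Suc t))" using allT tT by simp
      note st = step[OF tT VS]
      have "\<exists>u. \<forall>v. ?E t x u p \<le> ?E t x v p" using st[THEN conjunct2, THEN conjunct1, rule_format, OF fin] .
      then have ne: "{u. \<forall>v. ?E t x u p \<le> ?E t x v p} \<noteq> {}" by simp
      have rest: "(\<forall>w\<in>?S (Suc t).
                  (\<lambda>p'. real_of_ereal (Lmu \<mu> L t x us w p')) differentiable (at p)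
                  \<and> (\<lambda>p'. real_of_ereal (?V (Suc t) (f t x us w) p')) differentiable (at p))
               \<and> GDERIV (\<lambda>p'. real_of_ereal (?V t x p')) p
                   :> Evec M (W (Suc t))
                        (\<lambda>w. grad (\<lambda>p'. real_of_ereal (Lmu \<mu> L t x us w p')) p
                             + grad (\<lambda>p'. real_of_ereal (?V (Suc t) (f t x us w) p')) p)"
        if us: "us \<in> {u. \<forall>v. ?E t x u p \<le> ?E t x v p}" for us
      proof -
        have us': "\<forall>v. ?E t x us p \<le> ?E t x v p" using us by simp
        have S3: "(\<forall>w\<in>?S (Suc t). Lmu \<mu> L t x us w p < \<infinity> \<and> ?V (Suc t) (f t x us w) p < \<infinity>) \<and>
          GDERIV (\<lambda>p'. real_of_ereal (?V t x p')) p :>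
          Evec M (W (Suc t)) (\<lambda>w. grad (\<lambda>p'. real_of_ereal (Lmu \<mu> L t x us w p')) p
                             + grad (\<lambda>p'. real_of_ereal (?V (Suc t) (f t x us w) p')) p)"
          using st[THEN conjunct2, THEN conjunct2, rule_format, OF fin us'[rule_format]] .
        have dd: "(\<lambda>p'. real_of_ereal (Lmu \<mu> L t x us w p')) differentiable (at p)
                  \<and> (\<lambda>p'. real_of_ereal (?V (Suc t) (f t x us w) p')) differentiable (at p)"
          if w: "w \<in> ?S (Suc t)" for w
        proof
          have l: "(\<lambda>(x, u) p. Lmu \<mu> L t x u w p) (x, us) p < \<infinity>" using S3 w by simp
          have "(\<lambda>p'. real_of_ereal ((\<lambda>(x, u) p. Lmu \<mu> L t x u w p) (x, us) p')) differentiable (at p)"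
            by (rule ThetaU_D(3)[OF LmT[OF tT w] l])
          then show "(\<lambda>p'. real_of_ereal (Lmu \<mu> L t x us w p')) differentiable (at p)" by simp
          have v: "?V (Suc t) (f t x us w) p < \<infinity>" using S3 w by blast
          show "(\<lambda>p'. real_of_ereal (?V (Suc t) (f t x us w) p')) differentiable (at p)"
            by (rule ThetaU_D(3)[OF VS v])
        qed
        show ?thesis using dd S3 by blast
      qed
      show "case z of (x, p) \<Rightarrow> {u. \<forall>v. ?E t x u p \<le> ?E t x v p} \<noteq> {}
          \<and> (\<forall>us\<in>{u. \<forall>v. ?E t x u p \<le> ?E t x v p}.
               (\<forall>w\<in>?S (Suc t).
                  (\<lambda>p'. real_of_ereal (Lmu \<mu> L t x us w p')) differentiable (at p)
                  \<and> (\<lambda>p'. real_of_ereal (?V (Suc t) (f t x us w) p')) differentiable (at p))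
               \<and> GDERIV (\<lambda>p'. real_of_ereal (?V t x p')) p
                   :> Evec M (W (Suc t))
                        (\<lambda>w. grad (\<lambda>p'. real_of_ereal (Lmu \<mu> L t x us w p')) p
                             + grad (\<lambda>p'. real_of_ereal (?V (Suc t) (f t x us w) p')) p))"
        unfolding z case_prod_conv
      proof (rule conjI)
        show "{u. \<forall>v. ?E t x u p \<le> ?E t x v p} \<noteq> {}" by (rule ne)
      next
        show "\<forall>us\<in>{u. \<forall>v. ?E t x u p \<le> ?E t x v p}.
               (\<forall>w\<in>?S (Suc t).
                  (\<lambda>p'. real_of_ereal (Lmu \<mu> L t x us w p')) differentiable (at p)
                  \<and> (\<lambda>p'. real_of_ereal (?V (Suc t) (f t x us w) p')) differentiable (at p))
               \<and> GDERIV (\<lambda>p'. real_of_ereal (?V t x p')) p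
                   :> Evec M (W (Suc t))
                        (\<lambda>w. grad (\<lambda>p'. real_of_ereal (Lmu \<mu> L t x us w p')) p
                             + grad (\<lambda>p'. real_of_ereal (?V (Suc t) (f t x us w) p')) p)"
          by (rule ballI) (rule rest)
      qed
    qed
  qed
qed
end
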